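(* Let $[t_0,t_1]$ be an admissible segment of $\mathbf r$ with associated tetrahedron $\mathbf r_0\mathbf r_1\mathbf r_2\mathbf r_3$, and for $t^\star\in(t_0,t_1)$ let $\mathbf r_{01},\mathbf r_{12},\mathbf r_{23}$ be the intersection points of the osculating plane $O(t^\star)$ with the lines $\mathbf r_0\mathbf r_1$, $\mathbf r_1\mathbf r_2$, $\mathbf r_2\mathbf r_3$. Define $k_1(t^\star)=\|\mathbf r_1\mathbf r_{01}\|/\|\mathbf r_1\mathbf r_0\|$, $k_2(t^\star)=\|\mathbf r_2\mathbf r_{12}\|/\|\mathbf r_2\mathbf r_1\|$, $k_3(t^\star)=\|\mathbf r_3\mathbf r_{23}\|/\|\mathbf r_3\mathbf r_2\|$. Then each $k_i$ is monotone on $(t_0,t_1)$ and $k_i(t^\star)\in(0,1)$ for all $t^\star\in(t_0,t_1)$, $i=1,2,3$.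
   Context: Setting: $\mathbf r(t)=(x(t),y(t),z(t))$ with $x,y,z$ rational functions with real coefficients whose denominators do not vanish on the parameter interval, properly parametrized, and not contained in a plane. Curvature $\kappa=\|\mathbf r'\times\mathbf r''\|/\|\mathbf r'\|^3$; torsion $\tau$ vanishes exactly where $\det(\mathbf r',\mathbf r'',\mathbf r''')=0$. Unit tangent $\boldsymbol\alpha=\mathbf r'/\|\mathbf r'\|$, unit binormal $\boldsymbol\gamma=\mathbf r'\times\mathbf r''/\|\mathbf r'\times\mathbf r''\|$; one-sided limits $\boldsymbol\alpha^{\pm}(s)=\lim_{t\to s^\pm}\boldsymbol\alpha(t)$, $\boldsymbol\gamma^{\pm}(s)=\lim_{t\to s^\pm}\boldsymbol\gamma(t)$; tangent lines $T^{\pm}(s)=\{\mathbf r(s)+\lambda\boldsymbol\alpha^{\pm}(s)\}$, osculating planes $O^{\pm}(s)=\{X:(X-\mathbf r(s))\cdot\boldsymbol\gamma^{\pm}(s)=0\}$ (written $O(s)$ at interior ordinary points). A point is singular if it corresponds to more than one parameter counted with multiplicity; character points are singular points, inflections ($\kappa=0$) and torsion-vanishing points ($\tau=0$). Associated tetrahedron of $[a,b]$: vertices $\mathbf r(a)$, $T^+(a)\cap L$, $T^-(b)\cap L$, $\mathbf r(b)$ where $L=O^+(a)\cap O^-(b)$. Admissible segment: $t_0<t_1$, no parameter in $(t_0,t_1]$ gives a character point, and for all $t_0\le s_1<s_2\le t_1$: (I) $\boldsymbol\alpha^+(s_1)\cdot\boldsymbol\gamma^-(s_2)\ne0$ and $\boldsymbol\alpha^-(s_2)\cdot\boldsymbol\gamma^+(s_1)\ne0$;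 (II) $(\boldsymbol\alpha^+(s_1)\times(\mathbf r(s_2)-\mathbf r(s_1)))\cdot\boldsymbol\alpha^-(s_2)\ne0$; (III) $(\mathbf r(s_1)-\mathbf r(s_2))\cdot\boldsymbol\gamma^-(s_2)\ne0$ and $(\mathbf r(s_2)-\mathbf r(s_1))\cdot\boldsymbol\gamma^+(s_1)\ne0$; and (IV) for all $t_0\le s_1<s_2<s_3\le t_1$, $\det(\boldsymbol\alpha(s_1),\boldsymbol\alpha(s_2),\boldsymbol\alpha(s_3))\ne0$ (one-sided limits used at $t_0,t_1$). *)

theory Defs
  imports "HOL-Analysis.Analysis" "HOL-Analysis.Cross3" "HOL-Computational_Algebra.Polynomial"
begin

definition rcurve :: "real poly ^ 3 \<Rightarrow> real poly ^ 3 \<Rightarrow> real \<Rightarrow> real ^ 3" where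
  "rcurve P Q t = (\<chi> i. poly (P $ i) t / poly (Q $ i) t)"

text \<open>Complexified curve (for parameter counting over the complex numbers).\<close>

definition cpoly :: "real poly \<Rightarrow> complex poly" where
  "cpoly p = map_poly complex_of_real p"

definition rcurveC :: "real poly ^ 3 \<Rightarrow> real poly ^ 3 \<Rightarrow> complex \<Rightarrow> complex ^ 3" where
  "rcurveC P Q z = (\<chi> i. poly (cpoly (P $ i)) z / poly (cpoly (Q $ i)) z)"

definition in_domC :: "real poly ^ 3 \<Rightarrow> complex \<Rightarrow> bool" where
  "in_domC Q z \<longleftrightarrow> (\<forall>i. poly (cpoly (Q $ i)) z \<noteq> 0)"

definition proper_param :: "real poly ^ 3 \<Rightarrow> real poly ^ 3 \<Rightarrow> bool" where
  "proper_param P Q \<longleftrightarrow>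
     (\<exists>F :: complex set. finite F \<and>
        (\<forall>t u. t \<notin> F \<and> in_domC Q t \<and> in_domC Q u \<and> rcurveC P Q u = rcurveC P Q t \<longrightarrow> u = t))"

definition rational_space_curve :: "real poly ^ 3 \<Rightarrow> real poly ^ 3 \<Rightarrow> real set \<Rightarrow> bool" where
  "rational_space_curve P Q I \<longleftrightarrow>
     is_interval I \<and>
     (\<forall>i. Q $ i \<noteq> 0 \<and> coprime (P $ i) (Q $ i)) \<and>
     (\<forall>t\<in>I. \<forall>i. poly (Q $ i) t \<noteq> 0) \<and>
     proper_param P Q \<and>
     \<not> (\<exists>n c. n \<noteq> 0 \<and> (\<forall>t\<in>I. n \<bullet> rcurve P Q t = c))"

definition d1 :: "(real \<Rightarrow> real ^ 3) \<Rightarrow> real \<Rightarrow> real ^ 3" where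
  "d1 r t = vector_derivative r (at t)"

definition d2 :: "(real \<Rightarrow> real ^ 3) \<Rightarrow> real \<Rightarrow> real ^ 3" where
  "d2 r t = d1 (d1 r) t"

definition d3 :: "(real \<Rightarrow> real ^ 3) \<Rightarrow> real \<Rightarrow> real ^ 3" where
  "d3 r t = d1 (d2 r) t"

definition curvature :: "(real \<Rightarrow> real ^ 3) \<Rightarrow> real \<Rightarrow> real" where
  "curvature r t = norm (cross3 (d1 r t) (d2 r t)) / norm (d1 r t) ^ 3"

definition torsion :: "(real \<Rightarrow> real ^ 3) \<Rightarrow> real \<Rightarrow> real" where
  "torsion r t = ((cross3 (d1 r t) (d2 r t)) \<bullet> d3 r t) / norm (cross3 (d1 r t) (d2 r t)) ^ 2"

definition unit_tangent :: "(real \<Rightarrow> real ^ 3) \<Rightarrow> real \<Rightarrow> real ^ 3" where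
  "unit_tangent r t = d1 r t /\<^sub>R norm (d1 r t)"

definition unit_binormal :: "(real \<Rightarrow> real ^ 3) \<Rightarrow> real \<Rightarrow> real ^ 3" where
  "unit_binormal r t = (cross3 (d1 r t) (d2 r t)) /\<^sub>R norm (cross3 (d1 r t) (d2 r t))"

definition alpha_plus :: "(real \<Rightarrow> real ^ 3) \<Rightarrow> real \<Rightarrow> real ^ 3" where
  "alpha_plus r s = Lim (at_right s) (unit_tangent r)"

definition alpha_minus :: "(real \<Rightarrow> real ^ 3) \<Rightarrow> real \<Rightarrow> real ^ 3" where
  "alpha_minus r s = Lim (at_left s) (unit_tangent r)"

definition gamma_plus :: "(real \<Rightarrow> real ^ 3) \<Rightarrow> real \<Rightarrow> real ^ 3" where
  "gamma_plus r s = Lim (at_right s) (unit_binormal r)"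

definition gamma_minus :: "(real \<Rightarrow> real ^ 3) \<Rightarrow> real \<Rightarrow> real ^ 3" where
  "gamma_minus r s = Lim (at_left s) (unit_binormal r)"

text \<open>A parameter s gives a singular point if the point r(s) corresponds to more than one
  (complex) parameter counted with multiplicity: either another parameter z \<noteq> s maps to
  r(s), or s itself has multiplicity \<ge> 2 in the fibre, i.e. (t - s)^2 divides every
  P_i - r_i(s) Q_i.\<close>

definition singular_param :: "real poly ^ 3 \<Rightarrow> real poly ^ 3 \<Rightarrow> real \<Rightarrow> bool" where
  "singular_param P Q s \<longleftrightarrow>
     (\<exists>z. z \<noteq> complex_of_real s \<and> in_domC Q z \<and>
          rcurveC P Q z = (\<chi> i. complex_of_real (rcurve P Q s $ i))) \<or>
     (\<forall>i. [:-s, 1:] ^ 2 dvd (P $ i - smult (rcurve P Q s $ i) (Q $ i)))"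

definition character_param :: "real poly ^ 3 \<Rightarrow> real poly ^ 3 \<Rightarrow> real \<Rightarrow> bool" where
  "character_param P Q s \<longleftrightarrow>
     singular_param P Q s \<or> curvature (rcurve P Q) s = 0 \<or> torsion (rcurve P Q) s = 0"

definition seg_alpha :: "(real \<Rightarrow> real ^ 3) \<Rightarrow> real \<Rightarrow> real \<Rightarrow> real \<Rightarrow> real ^ 3" where
  "seg_alpha r t0 t1 s =
     (if s = t0 then alpha_plus r t0 else if s = t1 then alpha_minus r t1 else unit_tangent r s)"

definition admissible_segment ::
  "real poly ^ 3 \<Rightarrow> real poly ^ 3 \<Rightarrow> real set \<Rightarrow> real \<Rightarrow> real \<Rightarrow> bool" where
  "admissible_segment P Q I t0 t1 \<longleftrightarrow>
     (let r = rcurve P Q in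
      t0 < t1 \<and> {t0..t1} \<subseteq> I \<and>
      (\<forall>s\<in>{t0<..t1}. \<not> character_param P Q s) \<and>
      (\<forall>s1 s2. t0 \<le> s1 \<and> s1 < s2 \<and> s2 \<le> t1 \<longrightarrow>
         alpha_plus r s1 \<bullet> gamma_minus r s2 \<noteq> 0 \<and>
         alpha_minus r s2 \<bullet> gamma_plus r s1 \<noteq> 0 \<and>
         (cross3 (alpha_plus r s1) (r s2 - r s1)) \<bullet> alpha_minus r s2 \<noteq> 0 \<and>
         (r s1 - r s2) \<bullet> gamma_minus r s2 \<noteq> 0 \<and>
         (r s2 - r s1) \<bullet> gamma_plus r s1 \<noteq> 0) \<and>
      (\<forall>s1 s2 s3. t0 \<le> s1 \<and> s1 < s2 \<and> s2 < s3 \<and> s3 \<le> t1 \<longrightarrow>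
         (cross3 (seg_alpha r t0 t1 s1) (seg_alpha r t0 t1 s2)) \<bullet> seg_alpha r t0 t1 s3 \<noteq> 0))"

definition tangent_line_plus :: "(real \<Rightarrow> real ^ 3) \<Rightarrow> real \<Rightarrow> (real ^ 3) set" where
  "tangent_line_plus r s = {r s + c *\<^sub>R alpha_plus r s | c. True}"

definition tangent_line_minus :: "(real \<Rightarrow> real ^ 3) \<Rightarrow> real \<Rightarrow> (real ^ 3) set" where
  "tangent_line_minus r s = {r s + c *\<^sub>R alpha_minus r s | c. True}"

definition osc_plane_plus :: "(real \<Rightarrow> real ^ 3) \<Rightarrow> real \<Rightarrow> (real ^ 3) set" where
  "osc_plane_plus r s = {X. (X - r s) \<bullet> gamma_plus r s = 0}"

definition osc_plane_minus :: "(real \<Rightarrow> real ^ 3) \<Rightarrow> real \<Rightarrow> (real ^ 3) set" where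
  "osc_plane_minus r s = {X. (X - r s) \<bullet> gamma_minus r s = 0}"

definition osc_plane :: "(real \<Rightarrow> real ^ 3) \<Rightarrow> real \<Rightarrow> (real ^ 3) set" where
  "osc_plane r s = {X. (X - r s) \<bullet> unit_binormal r s = 0}"

definition line_through :: "real ^ 3 \<Rightarrow> real ^ 3 \<Rightarrow> (real ^ 3) set" where
  "line_through A B = {A + \<mu> *\<^sub>R (B - A) | \<mu>. True}"

definition tet_vertex :: "(real \<Rightarrow> real ^ 3) \<Rightarrow> real \<Rightarrow> real \<Rightarrow> nat \<Rightarrow> real ^ 3" where
  "tet_vertex r a b i =
     (let L = osc_plane_plus r a \<inter> osc_plane_minus r b in
      if i = 0 then r a
      else if i = 1 then (THE X. X \<in> tangent_line_plus r a \<inter> L)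
      else if i = 2 then (THE X. X \<in> tangent_line_minus r b \<inter> L)
      else r b)"

definition tet_ratio :: "(real \<Rightarrow> real ^ 3) \<Rightarrow> real \<Rightarrow> real \<Rightarrow> nat \<Rightarrow> real \<Rightarrow> real" where
  "tet_ratio r a b i t =
     (let A = tet_vertex r a b (i - 1); B = tet_vertex r a b i;
          X = (THE X. X \<in> osc_plane r t \<inter> line_through A B) in
      dist B X / dist B A)"

end

theory Submission
  imports Defs
begin

lemma vec_lambda_has_vector_derivative:
  fixes f :: "real \<Rightarrow> 'n::finite \<Rightarrow> real"
  assumes "\<And>i. ((\<lambda>t. f t i) has_real_derivative f' i) (at x)"
  shows "((\<lambda>t. \<chi> i. f t i) has_vector_derivative (\<chi> i. f' i)) (at x)"
  unfolding has_vector_derivative_def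
  apply (subst has_derivative_componentwise_within)
proof (auto simp: Basis_vec_def inner_axis)
  fix y
  have "((\<lambda>t. f t y) has_derivative (\<lambda>x. f' y * x)) (at x)"
    using assms[of y] by (simp add: has_field_derivative_def)
  thus "((\<lambda>x. f x y) has_derivative (\<lambda>x. x * f' y)) (at x)"
    by (simp add: mult.commute)
qed

definition UQ :: "real poly ^ 3 \<Rightarrow> real set" where
  "UQ Q = {t. \<forall>i. poly (Q $ i) t \<noteq> 0}"

definition dP :: "real poly ^ 3 \<Rightarrow> real poly ^ 3 \<Rightarrow> real poly ^ 3" where
  "dP P Q = (\<chi> i. pderiv (P $ i) * Q $ i - P $ i * pderiv (Q $ i))"

definition dQ :: "real poly ^ 3 \<Rightarrow> real poly ^ 3" where
  "dQ Q = (\<chi> i. Q $ i * Q $ i)"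

lemma UQ_dQ [simp]: "UQ (dQ Q) = UQ Q"
  by (simp add: UQ_def dQ_def)

lemma open_UQ: "open (UQ Q)"
proof -
  have "UQ Q = (\<Inter>i\<in>UNIV. {t. poly (Q $ i) t \<noteq> 0})" by (auto simp: UQ_def)
  moreover have "open {t. poly (Q $ i) t \<noteq> 0}" for i
    by (intro open_Collect_neq continuous_intros)
  ultimately show ?thesis by auto
qed

lemma rcurve_has_vector_derivative:
  assumes "t \<in> UQ Q"
  shows "(rcurve P Q has_vector_derivative rcurve (dP P Q) (dQ Q) t) (at t)"
proof -
  have "((\<lambda>t. poly (P $ i) t / poly (Q $ i) t) has_real_derivative
        poly (dP P Q $ i) t / poly (dQ Q $ i) t) (at t)" for i
  proof -
    have q: "poly (Q $ i) t \<noteq> 0" using assms by (auto simp: UQ_def)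
    have "((\<lambda>t. poly (P $ i) t / poly (Q $ i) t) has_real_derivative
        (poly (pderiv (P $ i)) t * poly (Q $ i) t - poly (P $ i) t * poly (pderiv (Q $ i)) t) / (poly (Q $ i) t * poly (Q $ i) t)) (at t)"
      by (rule DERIV_divide[OF poly_DERIV poly_DERIV q])
    thus ?thesis by (simp add: dP_def dQ_def)
  qed
  thus ?thesis unfolding rcurve_def
    by (intro vec_lambda_has_vector_derivative)
qed

lemma d1_eq_on:
  assumes "t \<in> UQ Q" "\<And>y. y \<in> UQ Q \<Longrightarrow> g y = rcurve P Q y"
  shows "d1 g t = rcurve (dP P Q) (dQ Q) t"
    and "(g has_vector_derivative rcurve (dP P Q) (dQ Q) t) (at t)"
proof -
  show "(g has_vector_derivative rcurve (dP P Q) (dQ Q) t) (at t)"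
    by (rule has_vector_derivative_transform_within_open[OF rcurve_has_vector_derivative[OF assms(1)] open_UQ assms(1)])
       (simp add: assms(2))
  thus "d1 g t = rcurve (dP P Q) (dQ Q) t"
    unfolding d1_def by (rule vector_derivative_at)
qed

lemma continuous_on_rcurve: "continuous_on (UQ Q) (rcurve P Q)"
  by (intro continuous_at_imp_continuous_on ballI has_vector_derivative_continuous)
     (rule rcurve_has_vector_derivative)

definition ratf :: "real set \<Rightarrow> (real \<Rightarrow> real) \<Rightarrow> bool" where
  "ratf S f \<longleftrightarrow> (\<exists>p q. \<forall>t\<in>S. poly q t \<noteq> 0 \<and> f t = poly p t / poly q t)"

lemma ratf_rcurve: "S \<subseteq> UQ Q \<Longrightarrow> ratf S (\<lambda>t. rcurve P Q t $ i)"
  unfolding ratf_def rcurve_def UQ_def by (rule exI[of _ "P $ i"], rule exI[of _ "Q $ i"]) auto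

lemma ratf_mult:
  assumes "ratf S f" "ratf S g" shows "ratf S (\<lambda>t. f t * g t)"
proof -
  obtain p q where 1: "\<forall>t\<in>S. poly q t \<noteq> 0 \<and> f t = poly p t / poly q t" using assms(1) ratf_def by auto
  obtain p' q' where 2: "\<forall>t\<in>S. poly q' t \<noteq> 0 \<and> g t = poly p' t / poly q' t" using assms(2) ratf_def by auto
  show ?thesis unfolding ratf_def
    by (rule exI[of _ "p * p'"], rule exI[of _ "q * q'"]) (use 1 2 in auto)
qed

lemma ratf_diff:
  assumes "ratf S f" "ratf S g" shows "ratf S (\<lambda>t. f t - g t)"
proof -
  obtain p q where 1: "\<forall>t\<in>S. poly q t \<noteq> 0 \<and> f t = poly p t / poly q t" using assms(1) ratf_def by auto
  obtain p' q' where 2: "\<forall>t\<in>S. poly q' t \<noteq> 0 \<and> g t = poly p' t / poly q' t" using assms(2) ratf_def by auto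
  show ?thesis unfolding ratf_def
    by (rule exI[of _ "p * q' - p' * q"], rule exI[of _ "q * q'"]) (use 1 2 in \<open>auto simp: field_simps\<close>)
qed

lemma ratf_cross:
  assumes "\<And>i. ratf S (\<lambda>t. F t $ i)" "\<And>i. ratf S (\<lambda>t. G t $ i)"
  shows "ratf S (\<lambda>t. cross3 (F t) (G t) $ i)"
proof -
  have "i = 1 \<or> i = 2 \<or> i = 3" using exhaust_3 by blast
  thus ?thesis
    by (auto simp: cross3_def intro!: ratf_diff ratf_mult assms)
qed

lemma ratf_unit_limit:
  fixes F :: "real \<Rightarrow> real ^ 3"
  assumes S: "open S" "t0 \<in> S" and rat: "\<And>i. ratf S (\<lambda>t. F t $ i)"
    and nz: "\<exists>t\<in>S. F t \<noteq> 0"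
  shows "\<exists>L. ((\<lambda>t. F t /\<^sub>R norm (F t)) \<longlongrightarrow> L) (at_right t0)"
proof -
  have "\<forall>i. \<exists>pq. \<forall>t\<in>S. poly (snd pq) t \<noteq> 0 \<and> F t $ i = poly (fst pq) t / poly (snd pq) t"
    using rat unfolding ratf_def by auto
  then obtain pq where pq: "\<And>i t. t \<in> S \<Longrightarrow> poly (snd (pq i)) t \<noteq> 0 \<and> F t $ i = poly (fst (pq i)) t / poly (snd (pq i)) t"
    by metis
  define p where "p i = fst (pq i)" for i
  define q where "q i = snd (pq i)" for i
  have pq': "\<And>i t. t \<in> S \<Longrightarrow> poly (q i) t \<noteq> 0 \<and> F t $ i = poly (p i) t / poly (q i) t"
    using pq by (simp add: p_def q_def)
  define N where "N = {i. p i \<noteq> 0}"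
  have "N \<noteq> {}"
  proof
    assume "N = {}"
    then have "\<forall>i. p i = 0" by (auto simp: N_def)
    then have "\<forall>t\<in>S. F t = 0" using pq' by (auto simp: vec_eq_iff)
    thus False using nz by auto
  qed
  define m where "m = Min ((\<lambda>i. order t0 (p i)) ` N)"
  obtain j where j: "j \<in> N" "order t0 (p j) = m"
  proof -
    have "m \<in> (\<lambda>i. order t0 (p i)) ` N"
      unfolding m_def by (rule Min_in) (use \<open>N \<noteq> {}\<close> in auto)
    thus ?thesis using that by auto
  qed
  have mle: "i \<in> N \<Longrightarrow> m \<le> order t0 (p i)" for i
    unfolding m_def by (rule Min_le) auto
  define h where "h i = p i div [:-t0, 1:] ^ m" for i
  have ph: "p i = [:-t0, 1:] ^ m * h i" for i
  proof (cases "i \<in> N")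
    case True
    then have "[:-t0, 1:] ^ m dvd p i" using mle[OF True] by (simp add: order_divides)
    thus ?thesis by (simp add: h_def)
  next
    case False
    thus ?thesis by (simp add: N_def h_def)
  qed
  have hj: "poly (h j) t0 \<noteq> 0"
  proof
    assume "poly (h j) t0 = 0"
    then have "[:-t0, 1:] dvd h j" by (simp add: poly_eq_0_iff_dvd)
    then have "[:-t0, 1:] ^ m * [:-t0, 1:] dvd [:-t0, 1:] ^ m * h j" by (rule mult_dvd_mono[OF dvd_refl])
    then have "[:-t0, 1:] ^ Suc m dvd p j" by (simp only: ph[of j] power_Suc2)
    then have "Suc m \<le> order t0 (p j)" using j(1) unfolding order_divides by (simp add: N_def)
    thus False using j(2) by simp
  qed
  define G where "G t = (\<chi> i. poly (h i) t / poly (q i) t)" for t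
  have FG: "F t = (t - t0) ^ m *\<^sub>R G t" if "t \<in> S" for t
    using pq'[OF that] by (auto simp: vec_eq_iff G_def ph)
  have G0: "G t0 \<noteq> 0"
    using hj pq'[OF S(2), of j] by (auto simp: vec_eq_iff G_def intro!: exI[of _ j])
  have c: "isCont (\<lambda>t. poly (h i) t / poly (q i) t) t0" for i
    using pq'[OF S(2), of i] by (intro continuous_intros) auto
  have "isCont G t0"
    using c unfolding G_def isCont_def by (auto intro!: tendsto_vec_lambda)
  then have "isCont (\<lambda>t. G t /\<^sub>R norm (G t)) t0"
    using G0 by (intro continuous_intros) auto
  then have lim: "((\<lambda>t. G t /\<^sub>R norm (G t)) \<longlongrightarrow> G t0 /\<^sub>R norm (G t0)) (at_right t0)"
    by (simp add: isCont_def filterlim_at_split)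
  have ev: "eventually (\<lambda>t. G t /\<^sub>R norm (G t) = F t /\<^sub>R norm (F t)) (at_right t0)"
  proof -
    have "eventually (\<lambda>t. t \<in> S) (at_right t0)"
      using eventually_at_in_open'[OF S] unfolding eventually_at_filter by (auto elim: eventually_mono)
    moreover have "eventually (\<lambda>t. t > t0) (at_right t0)" by (simp add: eventually_at_right_less)
    ultimately show ?thesis
    proof eventually_elim
      case (elim t)
      have pos: "(t - t0) ^ m > 0" using elim by simp
      show ?case using FG[OF elim(1)] pos elim(2) by (simp add: divide_simps)
    qed
  qed
  show ?thesis using tendsto_cong[OF ev] lim by auto
qed

locale seg =
  fixes P Q :: "real poly ^ 3" and I :: "real set" and t0 t1 :: real
  assumes curve: "rational_space_curve P Q I"
    and adm: "admissible_segment P Q I t0 t1"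
begin

abbreviation r where "r \<equiv> rcurve P Q"
definition "U = UQ Q"
definition "P1 = dP P Q"  definition "Q1 = dQ Q"
definition "P2 = dP P1 Q1"  definition "Q2 = dQ Q1"
definition "P3 = dP P2 Q2"  definition "Q3 = dQ Q2"
definition "P4 = dP P3 Q3"  definition "Q4 = dQ Q3"
definition "R1 = rcurve P1 Q1"
definition "R2 = rcurve P2 Q2"
definition "R3 = rcurve P3 Q3"
definition "R4 = rcurve P4 Q4"

lemma UQs: "UQ Q1 = U" "UQ Q2 = U" "UQ Q3 = U" "UQ Q = U"
  by (simp_all add: Q1_def Q2_def Q3_def U_def)

lemma openU: "open U" by (simp add: U_def open_UQ)

lemma t01: "t0 < t1" using adm by (simp add: admissible_segment_def Let_def)

lemma sub: "{t0..t1} \<subseteq> U"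
proof -
  have "{t0..t1} \<subseteq> I" using adm by (simp add: admissible_segment_def Let_def)
  moreover have "\<forall>t\<in>I. \<forall>i. poly (Q $ i) t \<noteq> 0" using curve by (simp add: rational_space_curve_def)
  ultimately show ?thesis by (auto simp: U_def UQ_def)
qed

lemma der0: "t \<in> U \<Longrightarrow> (r has_vector_derivative R1 t) (at t)"
  using rcurve_has_vector_derivative[of t Q P] by (simp add: U_def R1_def P1_def Q1_def)
lemma der1: "t \<in> U \<Longrightarrow> (R1 has_vector_derivative R2 t) (at t)"
  using rcurve_has_vector_derivative[of t Q1 P1] by (simp add: UQs R1_def R2_def P2_def Q2_def)
lemma der2: "t \<in> U \<Longrightarrow> (R2 has_vector_derivative R3 t) (at t)"
  using rcurve_has_vector_derivative[of t Q2 P2] by (simp add: UQs R2_def R3_def P3_def Q3_def)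
lemma der3: "t \<in> U \<Longrightarrow> (R3 has_vector_derivative R4 t) (at t)"
  using rcurve_has_vector_derivative[of t Q3 P3] by (simp add: UQs R3_def R4_def P4_def Q4_def)

lemma d1_eq: "t \<in> U \<Longrightarrow> d1 r t = R1 t"
  unfolding d1_def by (rule vector_derivative_at[OF der0])
lemma d2_eq: "t \<in> U \<Longrightarrow> d2 r t = R2 t"
proof -
  assume t: "t \<in> U"
  have "(d1 r has_vector_derivative R2 t) (at t)"
    by (rule has_vector_derivative_transform_within_open[OF der1[OF t] openU t]) (simp add: d1_eq)
  thus ?thesis unfolding d2_def d1_def[of "d1 r"] by (rule vector_derivative_at)
qed
lemma d3_eq: "t \<in> U \<Longrightarrow> d3 r t = R3 t"
proof -
  assume t: "t \<in> U"
  have "(d2 r has_vector_derivative R3 t) (at t)"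
    by (rule has_vector_derivative_transform_within_open[OF der2[OF t] openU t]) (simp add: d2_eq)
  thus ?thesis unfolding d3_def d1_def[of "d2 r"] by (rule vector_derivative_at)
qed

lemma isCont_r: "t \<in> U \<Longrightarrow> isCont r t"
  using der0 has_vector_derivative_continuous by blast
lemma isCont_R1: "t \<in> U \<Longrightarrow> isCont R1 t"
  using der1 has_vector_derivative_continuous by blast
lemma isCont_R2: "t \<in> U \<Longrightarrow> isCont R2 t"
  using der2 has_vector_derivative_continuous by blast
lemma isCont_R3: "t \<in> U \<Longrightarrow> isCont R3 t"
  using der3 has_vector_derivative_continuous by blast

definition "c t = cross3 (R1 t) (R2 t)"
definition "Dl t = c t \<bullet> R3 t"
definition "al t = R1 t /\<^sub>R norm (R1 t)"
definition "ga t = c t /\<^sub>R norm (c t)"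

lemma isCont_c: "t \<in> U \<Longrightarrow> isCont c t"
  unfolding c_def by (intro continuous_cross isCont_R1 isCont_R2)

lemma regular:
  assumes "t0 < t" "t \<le> t1"
  shows "c t \<noteq> 0" "Dl t \<noteq> 0" "R1 t \<noteq> 0"
proof -
  have tU: "t \<in> U" using sub assms by auto
  have nc: "\<not> character_param P Q t"
    using adm assms by (simp add: admissible_segment_def Let_def)
  hence "curvature r t \<noteq> 0" "torsion r t \<noteq> 0" by (auto simp: character_param_def)
  thus "c t \<noteq> 0" "Dl t \<noteq> 0"
    by (auto simp: curvature_def torsion_def d1_eq d2_eq d3_eq tU c_def Dl_def)
  thus "R1 t \<noteq> 0" by (auto simp: c_def)
qed

lemma ut_eq: "t \<in> U \<Longrightarrow> unit_tangent r t = al t"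
  by (simp add: unit_tangent_def al_def d1_eq)
lemma ub_eq: "t \<in> U \<Longrightarrow> unit_binormal r t = ga t"
  by (simp add: unit_binormal_def ga_def d1_eq d2_eq c_def)

lemma isCont_al: "t0 < t \<Longrightarrow> t \<le> t1 \<Longrightarrow> isCont al t"
  unfolding al_def using regular[of t] sub
  by (intro continuous_intros isCont_R1) auto
lemma isCont_ga: "t0 < t \<Longrightarrow> t \<le> t1 \<Longrightarrow> isCont ga t"
  unfolding ga_def using regular[of t] sub
  by (intro continuous_intros isCont_c) auto

lemma ev_U: "t \<in> U \<Longrightarrow> eventually (\<lambda>x. x \<in> U) (at t within S)"
  using eventually_at_in_open'[OF openU] eventually_at_filter
  by (metis (mono_tags, lifting) at_le eventually_at_in_open' filter_leD openU top_greatest)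

lemma ut_tendsto: "t \<in> U \<Longrightarrow> (al \<longlongrightarrow> l) F \<Longrightarrow> F \<le> at t within S \<Longrightarrow> (unit_tangent r \<longlongrightarrow> l) F"
  by (rule tendsto_cong[THEN iffD1, rotated], assumption)
     (metis (mono_tags, lifting) ev_U eventually_mono filter_leD ut_eq)
lemma ub_tendsto: "t \<in> U \<Longrightarrow> (ga \<longlongrightarrow> l) F \<Longrightarrow> F \<le> at t within S \<Longrightarrow> (unit_binormal r \<longlongrightarrow> l) F"
  by (rule tendsto_cong[THEN iffD1, rotated], assumption)
     (metis (mono_tags, lifting) ev_U eventually_mono filter_leD ub_eq)

end

lemma tendsto_ev_eq: "eventually (\<lambda>x. f x = g x) F \<Longrightarrow> (f \<longlongrightarrow> l) F \<Longrightarrow> (g \<longlongrightarrow> l) F"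
  using tendsto_cong by blast

context seg begin

lemma t0U: "t0 \<in> U" and t1U: "t1 \<in> U" using sub t01 by auto

lemma lim_al: "\<exists>L. (al \<longlongrightarrow> L) (at_right t0)"
proof -
  have rat: "ratf U (\<lambda>t. R1 t $ i)" for i
    unfolding R1_def by (rule ratf_rcurve) (simp add: UQs)
  have "\<exists>t\<in>U. R1 t \<noteq> 0" using regular(3)[of t1] t01 t1U by auto
  from ratf_unit_limit[OF openU t0U rat this] show ?thesis by (simp add: al_def[abs_def])
qed

lemma lim_ga: "\<exists>L. (ga \<longlongrightarrow> L) (at_right t0)"
proof -
  have rat1: "ratf U (\<lambda>t. R1 t $ i)" for i
    unfolding R1_def by (rule ratf_rcurve) (simp add: UQs)
  have rat2: "ratf U (\<lambda>t. R2 t $ i)" for i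
    unfolding R2_def by (rule ratf_rcurve) (simp add: UQs)
  have rat: "ratf U (\<lambda>t. c t $ i)" for i
    unfolding c_def by (rule ratf_cross[OF rat1 rat2])
  have "\<exists>t\<in>U. c t \<noteq> 0" using regular(1)[of t1] t01 t1U by auto
  from ratf_unit_limit[OF openU t0U rat this] show ?thesis by (simp add: ga_def[abs_def])
qed

definition "a0 = alpha_plus r t0"
definition "g0 = gamma_plus r t0"

lemma al_a0: "(al \<longlongrightarrow> a0) (at_right t0)"
proof -
  obtain L where L: "(al \<longlongrightarrow> L) (at_right t0)" using lim_al by auto
  have "(unit_tangent r \<longlongrightarrow> L) (at_right t0)"
    by (rule ut_tendsto[OF t0U L, where S="{t0<..}"]) simp
  hence "a0 = L" unfolding a0_def alpha_plus_def by (intro tendsto_Lim) auto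
  thus ?thesis using L by simp
qed

lemma ga_g0: "(ga \<longlongrightarrow> g0) (at_right t0)"
proof -
  obtain L where L: "(ga \<longlongrightarrow> L) (at_right t0)" using lim_ga by auto
  have "(unit_binormal r \<longlongrightarrow> L) (at_right t0)"
    by (rule ub_tendsto[OF t0U L, where S="{t0<..}"]) simp
  hence "g0 = L" unfolding g0_def gamma_plus_def by (intro tendsto_Lim) auto
  thus ?thesis using L by simp
qed

lemma al_ga_orth: "t \<in> U \<Longrightarrow> al t \<bullet> ga t = 0"
  by (simp add: al_def ga_def c_def dot_cross_self)

lemma a0_g0: "a0 \<bullet> g0 = 0"
proof -
  have l: "((\<lambda>t. al t \<bullet> ga t) \<longlongrightarrow> a0 \<bullet> g0) (at_right t0)"
    by (intro tendsto_inner al_a0 ga_g0)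
  have e: "eventually (\<lambda>t. al t \<bullet> ga t = 0) (at_right t0)"
    using ev_U[OF t0U] by (rule eventually_mono) (simp add: al_ga_orth)
  have z: "((\<lambda>t. 0) \<longlongrightarrow> a0 \<bullet> g0) (at_right t0)"
    by (rule tendsto_ev_eq[OF e l])
  show ?thesis using tendsto_unique[OF _ z tendsto_const] by simp
qed

lemma plus_eq: "t0 < s \<Longrightarrow> s \<le> t1 \<Longrightarrow> alpha_plus r s = al s \<and> alpha_minus r s = al s \<and> gamma_plus r s = ga s \<and> gamma_minus r s = ga s"
proof -
  assume s: "t0 < s" "s \<le> t1"
  hence sU: "s \<in> U" using sub by auto
  have 1: "(al \<longlongrightarrow> al s) (at s)" using isCont_al[OF s] by (simp add: isCont_def)
  have 2: "(ga \<longlongrightarrow> ga s) (at s)" using isCont_ga[OF s] by (simp add: isCont_def)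
  have 1: "(al \<longlongrightarrow> al s) (at_right s)" "(al \<longlongrightarrow> al s) (at_left s)"
    using 1 by (simp_all add: filterlim_at_split)
  have 2: "(ga \<longlongrightarrow> ga s) (at_right s)" "(ga \<longlongrightarrow> ga s) (at_left s)"
    using 2 by (simp_all add: filterlim_at_split)
  have a: "(unit_tangent r \<longlongrightarrow> al s) (at_right s)" "(unit_tangent r \<longlongrightarrow> al s) (at_left s)"
    using ut_tendsto[OF sU 1(1), where S="{s<..}"] ut_tendsto[OF sU 1(2), where S="{..<s}"] by simp_all
  have b: "(unit_binormal r \<longlongrightarrow> ga s) (at_right s)" "(unit_binormal r \<longlongrightarrow> ga s) (at_left s)"
    using ub_tendsto[OF sU 2(1), where S="{s<..}"] ub_tendsto[OF sU 2(2), where S="{..<s}"] by simp_all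
  show ?thesis using a b
    by (simp add: alpha_plus_def alpha_minus_def gamma_plus_def gamma_minus_def tendsto_Lim)
qed

definition "alt s = (if s = t0 then a0 else al s)"
definition "gat s = (if s = t0 then g0 else ga s)"

lemma alt_cont: "continuous_on {t0..t1} alt"
proof (rule continuous_on_IccI[OF _ _ _ t01])
  have e0: "eventually (\<lambda>t. al t = alt t) (at_right t0)"
    by (auto simp: alt_def eventually_at_filter)
  show "(alt \<longlongrightarrow> alt t0) (at_right t0)"
    using tendsto_ev_eq[OF e0 al_a0] by (simp add: alt_def[abs_def])
  have e1: "eventually (\<lambda>t. al t = alt t) (at_left t1)"
    using t01 by (auto simp: alt_def eventually_at_left[OF t01] intro!: exI[of _ t0])
  have l1: "(al \<longlongrightarrow> al t1) (at_left t1)"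
    using isCont_al[OF t01 order_refl] by (simp add: isCont_def filterlim_at_split)
  show "(alt \<longlongrightarrow> alt t1) (at_left t1)"
    using tendsto_ev_eq[OF e1 l1] t01 by (simp add: alt_def[abs_def])
  fix x assume x: "t0 < x" "x < t1"
  show "(alt \<longlongrightarrow> alt x) (at x)"
  proof -
    have e: "eventually (\<lambda>t. al t = alt t) (at x)"
    proof -
      have "eventually (\<lambda>t. t \<in> {t0<..}) (at x)" by (rule eventually_at_in_open') (use x in auto)
      thus ?thesis by (rule eventually_mono) (simp add: alt_def)
    qed
    show ?thesis using tendsto_ev_eq[OF e] isCont_al[of x] x by (simp add: isCont_def alt_def[abs_def])
  qed
qed

lemma gat_cont: "continuous_on {t0..t1} gat"
proof (rule continuous_on_IccI[OF _ _ _ t01])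
  have e0: "eventually (\<lambda>t. ga t = gat t) (at_right t0)"
    by (auto simp: gat_def eventually_at_filter)
  show "(gat \<longlongrightarrow> gat t0) (at_right t0)"
    using tendsto_ev_eq[OF e0 ga_g0] by (simp add: gat_def[abs_def])
  have e1: "eventually (\<lambda>t. ga t = gat t) (at_left t1)"
    using t01 by (auto simp: gat_def eventually_at_left[OF t01] intro!: exI[of _ t0])
  have l1: "(ga \<longlongrightarrow> ga t1) (at_left t1)"
    using isCont_ga[OF t01 order_refl] by (simp add: isCont_def filterlim_at_split)
  show "(gat \<longlongrightarrow> gat t1) (at_left t1)"
    using tendsto_ev_eq[OF e1 l1] t01 by (simp add: gat_def[abs_def])
  fix x assume x: "t0 < x" "x < t1"
  show "(gat \<longlongrightarrow> gat x) (at x)"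
  proof -
    have e: "eventually (\<lambda>t. ga t = gat t) (at x)"
    proof -
      have "eventually (\<lambda>t. t \<in> {t0<..}) (at x)" by (rule eventually_at_in_open') (use x in auto)
      thus ?thesis by (rule eventually_mono) (simp add: gat_def)
    qed
    show ?thesis using tendsto_ev_eq[OF e] isCont_ga[of x] x by (simp add: isCont_def gat_def[abs_def])
  qed
qed

lemma alt_plus: "t0 \<le> s \<Longrightarrow> s < t1 \<Longrightarrow> alpha_plus r s = alt s \<and> gamma_plus r s = gat s"
  using plus_eq[of s] by (cases "s = t0") (auto simp: alt_def gat_def a0_def g0_def)
lemma alt_minus: "t0 < s \<Longrightarrow> s \<le> t1 \<Longrightarrow> alpha_minus r s = alt s \<and> gamma_minus r s = gat s"
  using plus_eq[of s] by (auto simp: alt_def gat_def)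

lemma conds:
  assumes "t0 \<le> s" "s < u" "u \<le> t1"
  shows "alt s \<bullet> gat u \<noteq> 0" "alt u \<bullet> gat s \<noteq> 0"
    "cross3 (alt s) (r u - r s) \<bullet> alt u \<noteq> 0"
    "(r s - r u) \<bullet> gat u \<noteq> 0" "(r u - r s) \<bullet> gat s \<noteq> 0"
proof -
  have "alpha_plus r s \<bullet> gamma_minus r u \<noteq> 0 \<and>
         alpha_minus r u \<bullet> gamma_plus r s \<noteq> 0 \<and>
         (cross3 (alpha_plus r s) (r u - r s)) \<bullet> alpha_minus r u \<noteq> 0 \<and>
         (r s - r u) \<bullet> gamma_minus r u \<noteq> 0 \<and>
         (r u - r s) \<bullet> gamma_plus r s \<noteq> 0"
    using adm assms unfolding admissible_segment_def Let_def by blast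
  thus "alt s \<bullet> gat u \<noteq> 0" "alt u \<bullet> gat s \<noteq> 0"
    "cross3 (alt s) (r u - r s) \<bullet> alt u \<noteq> 0"
    "(r s - r u) \<bullet> gat u \<noteq> 0" "(r u - r s) \<bullet> gat s \<noteq> 0"
    using alt_plus[of s] alt_minus[of u] assms by auto
qed

end

lemma sign_const:
  fixes f :: "'a::topological_space \<Rightarrow> real"
  assumes "connected S" "continuous_on S f" "\<forall>x\<in>S. f x \<noteq> 0" "x \<in> S" "y \<in> S" "f x > 0"
  shows "f y > 0"
proof (rule ccontr)
  assume "\<not> f y > 0"
  hence fy: "f y < 0" using assms(3,5) by force
  have "connected (f ` S)" by (rule connected_continuous_image[OF assms(2,1)])
  hence iv: "\<And>a b z. a \<in> f ` S \<Longrightarrow> b \<in> f ` S \<Longrightarrow> a \<le> z \<Longrightarrow> z \<le> b \<Longrightarrow> z \<in> f ` S"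
    unfolding connected_iff_interval by blast
  have "0 \<in> f ` S"
    by (rule iv[of "f y" "f x"]) (use assms(4,5,6) fy in auto)
  thus False using assms(3) by auto
qed

lemma sign_const':
  fixes f :: "'a::topological_space \<Rightarrow> real"
  assumes "connected S" "continuous_on S f" "\<forall>x\<in>S. f x \<noteq> 0" "x \<in> S" "y \<in> S"
  shows "f x > 0 \<longleftrightarrow> f y > 0"
  using sign_const[OF assms(1-3)] assms(4,5) by blast

lemma binet_cauchy:
  fixes x y a b :: "real ^ 3"
  shows "(x \<bullet> a) * (y \<bullet> b) - (x \<bullet> b) * (y \<bullet> a) = cross3 x y \<bullet> cross3 a b"
  by (simp add: cross3_simps)

lemma deriv_num_identity:
  fixes x w p q s :: "real ^ 3"
  shows "(x \<bullet> cross3 p s) * (w \<bullet> cross3 p q) - (x \<bullet> cross3 p q) * (w \<bullet> cross3 p s)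
       = - (cross3 p q \<bullet> s) * (cross3 x w \<bullet> p)"
  by (simp add: cross3_simps)

lemma triple_orth_zero:
  fixes d u1 u2 u3 :: "real ^ 3"
  assumes "d \<noteq> 0" "d \<bullet> u1 = 0" "d \<bullet> u2 = 0" "d \<bullet> u3 = 0"
  shows "u1 \<bullet> cross3 u2 u3 = 0"
proof -
  have "(u1 \<bullet> cross3 u2 u3) *\<^sub>R d = (d \<bullet> u1) *\<^sub>R cross3 u2 u3 + (d \<bullet> u2) *\<^sub>R cross3 u3 u1 + (d \<bullet> u3) *\<^sub>R cross3 u1 u2"
    by (simp add: cross3_simps) (auto simp: forall_3 algebra_simps)
  thus ?thesis using assms by simp
qed

lemma vd_inner:
  assumes "(f has_vector_derivative f') (at t)"
  shows "((\<lambda>z. f z \<bullet> w) has_real_derivative f' \<bullet> w) (at t)"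
proof -
  have "((\<lambda>z. f z \<bullet> w) has_derivative (\<lambda>x. (x *\<^sub>R f') \<bullet> w)) (at t)"
    using assms unfolding has_vector_derivative_def by (rule has_derivative_inner_left)
  thus ?thesis unfolding has_field_derivative_def by (rule has_derivative_eq_rhs) (auto simp: fun_eq_iff)
qed

context seg begin

lemma inU: "t0 \<le> x \<Longrightarrow> x \<le> t1 \<Longrightarrow> x \<in> U" using sub by auto

lemma taylor3:
  assumes "t0 \<le> x" "x \<le> t1" "t0 \<le> y" "y \<le> t1" "x \<noteq> y"
  shows "\<exists>\<xi>. (if x < y then x < \<xi> \<and> \<xi> < y else y < \<xi> \<and> \<xi> < x) \<and>
           (r x - r y) \<bullet> c y = (x - y) ^ 3 / 6 * (R3 \<xi> \<bullet> c y)"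
proof -
  define w where "w = c y"
  define diff where "diff m = (if m = 0 then (\<lambda>z. (r z - r y) \<bullet> w) else if m = 1 then (\<lambda>z. R1 z \<bullet> w)
     else if m = 2 then (\<lambda>z. R2 z \<bullet> w) else (\<lambda>z. R3 z \<bullet> w))" for m :: nat
  have D: "\<forall>m t. m < 3 \<and> min x y \<le> t \<and> t \<le> max x y \<longrightarrow> DERIV (diff m) t :> diff (Suc m) t"
  proof (intro allI impI)
    fix m :: nat and t :: real assume h: "m < 3 \<and> min x y \<le> t \<and> t \<le> max x y"
    hence tU: "t \<in> U" using assms by (intro inU) auto
    have "m = 0 \<or> m = 1 \<or> m = 2" using h by auto
    thus "DERIV (diff m) t :> diff (Suc m) t"
    proof (elim disjE)
      assume "m = 0"
      have "((\<lambda>z. r z - r y) has_vector_derivative R1 t - 0) (at t)"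
        by (intro has_vector_derivative_diff der0 tU has_vector_derivative_const)
      from vd_inner[OF this, of w] show ?thesis using \<open>m = 0\<close> by (simp add: diff_def)
    next
      assume "m = 1"
      from vd_inner[OF der1[OF tU], of w] show ?thesis using \<open>m = 1\<close> by (simp add: diff_def)
    next
      assume "m = 2"
      from vd_inner[OF der2[OF tU], of w] show ?thesis using \<open>m = 2\<close> by (simp add: diff_def)
    qed
  qed
  obtain \<xi> where \<xi>: "(if x < y then x < \<xi> \<and> \<xi> < y else y < \<xi> \<and> \<xi> < x)"
    "diff 0 x = (\<Sum>m<3. (diff m y / fact m) * (x - y)^m) + (diff 3 \<xi> / fact 3) * (x - y)^3"
  proof -
    have "\<exists>t. (if x < y then x < t \<and> t < y else y < t \<and> t < x) \<and>
      diff 0 x = (\<Sum>m<3. (diff m y / fact m) * (x - y)^m) + (diff 3 t / fact 3) * (x - y)^3"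
      by (rule Taylor[of 3 diff "diff 0" "min x y" "max x y" y x]) (use D assms(5) in auto)
    thus ?thesis using that by blast
  qed
  have "(\<Sum>m<3. (diff m y / fact m) * (x - y)^m) = 0"
    by (simp add: numeral_3_eq_3 diff_def w_def c_def dot_cross_self)
  moreover have "fact 3 = (6::real)" by (simp add: numeral_3_eq_3)
  moreover have "diff 0 x = (r x - r y) \<bullet> c y" "diff 3 \<xi> = R3 \<xi> \<bullet> c y" by (simp_all add: diff_def w_def)
  ultimately have "(r x - r y) \<bullet> c y = (x - y) ^ 3 / 6 * (R3 \<xi> \<bullet> c y)" using \<xi>(2) by (simp add: field_simps)
  thus ?thesis using \<xi>(1) by blast
qed

lemma taylor2:
  assumes "t0 \<le> x" "x \<le> t1" "t0 \<le> y" "y \<le> t1" "x \<noteq> y"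
  shows "\<exists>\<xi>. (if x < y then x < \<xi> \<and> \<xi> < y else y < \<xi> \<and> \<xi> < x) \<and>
           R1 x \<bullet> c y = (x - y) ^ 2 / 2 * (R3 \<xi> \<bullet> c y)"
proof -
  define w where "w = c y"
  define diff where "diff m = (if m = 0 then (\<lambda>z. R1 z \<bullet> w) else if m = 1 then (\<lambda>z. R2 z \<bullet> w)
     else (\<lambda>z. R3 z \<bullet> w))" for m :: nat
  have D: "\<forall>m t. m < 2 \<and> min x y \<le> t \<and> t \<le> max x y \<longrightarrow> DERIV (diff m) t :> diff (Suc m) t"
  proof (intro allI impI)
    fix m :: nat and t :: real assume h: "m < 2 \<and> min x y \<le> t \<and> t \<le> max x y"
    hence tU: "t \<in> U" using assms by (intro inU) auto
    have "m = 0 \<or> m = 1" using h by auto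
    thus "DERIV (diff m) t :> diff (Suc m) t"
    proof (elim disjE)
      assume "m = 0"
      from vd_inner[OF der1[OF tU], of w] show ?thesis using \<open>m = 0\<close> by (simp add: diff_def)
    next
      assume "m = 1"
      from vd_inner[OF der2[OF tU], of w] show ?thesis using \<open>m = 1\<close> by (simp add: diff_def)
    qed
  qed
  obtain \<xi> where \<xi>: "(if x < y then x < \<xi> \<and> \<xi> < y else y < \<xi> \<and> \<xi> < x)"
    "diff 0 x = (\<Sum>m<2. (diff m y / fact m) * (x - y)^m) + (diff 2 \<xi> / fact 2) * (x - y)^2"
  proof -
    have "\<exists>t. (if x < y then x < t \<and> t < y else y < t \<and> t < x) \<and>
      diff 0 x = (\<Sum>m<2. (diff m y / fact m) * (x - y)^m) + (diff 2 t / fact 2) * (x - y)^2"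
      by (rule Taylor[of 2 diff "diff 0" "min x y" "max x y" y x]) (use D assms(5) in auto)
    thus ?thesis using that by blast
  qed
  have "(\<Sum>m<2. (diff m y / fact m) * (x - y)^m) = 0"
    by (simp add: numeral_2_eq_2 diff_def w_def c_def dot_cross_self)
  moreover have "diff 0 x = R1 x \<bullet> c y" "diff 2 \<xi> = R3 \<xi> \<bullet> c y" by (simp_all add: diff_def w_def)
  ultimately have "R1 x \<bullet> c y = (x - y) ^ 2 / 2 * (R3 \<xi> \<bullet> c y)" using \<xi>(2) by (simp add: field_simps)
  thus ?thesis using \<xi>(1) by blast
qed

lemma near:
  assumes "t0 < p" "p < t1"
  shows "\<exists>d>0. \<forall>\<xi> y. \<bar>\<xi> - p\<bar> < d \<and> \<bar>y - p\<bar> < d \<longrightarrow>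
           Dl p * (R3 \<xi> \<bullet> c y) > 0 \<and> \<bar>R3 \<xi> \<bullet> c y\<bar> < 2 * \<bar>Dl p\<bar> \<and> \<bar>Dl p\<bar> < 2 * \<bar>R3 \<xi> \<bullet> c y\<bar>"
proof -
  have pU: "p \<in> U" using assms by (intro inU) auto
  define g where "g z = R3 (fst z) \<bullet> c (snd z)" for z :: "real \<times> real"
  have 1: "isCont (\<lambda>z. R3 (fst z)) (p, p)"
    by (rule isCont_o2[where f=fst and g=R3]) (simp_all add: isCont_R3 pU continuous_intros)
  have 2: "isCont (\<lambda>z. c (snd z)) (p, p)"
    by (rule isCont_o2[where f=snd and g=c]) (simp_all add: isCont_c pU continuous_intros)
  have "isCont g (p, p)" unfolding g_def
    by (intro continuous_intros 1 2)
  moreover have D: "Dl p \<noteq> 0" using regular(2)[of p] assms by auto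
  ultimately obtain d where d: "d > 0" "\<And>z. dist z (p, p) < d \<Longrightarrow> dist (g z) (g (p, p)) < \<bar>Dl p\<bar> / 2"
    unfolding continuous_at_eps_delta by (metis zero_less_abs_iff half_gt_zero)
  have gp: "g (p, p) = Dl p" by (simp add: g_def Dl_def inner_commute)
  show ?thesis
  proof (intro exI[of _ "d/2"] conjI allI impI)
    show "d / 2 > 0" using d by simp
    fix \<xi> y assume h: "\<bar>\<xi> - p\<bar> < d / 2 \<and> \<bar>y - p\<bar> < d / 2"
    have "dist (\<xi>, y) (p, p) \<le> \<bar>\<xi> - p\<bar> + \<bar>y - p\<bar>"
      unfolding dist_Pair_Pair dist_real_def using sqrt_sum_squares_le_sum_abs[of "\<xi> - p" "y - p"] by simp
    hence "dist (\<xi>, y) (p, p) < d" using h by simp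
    hence "\<bar>R3 \<xi> \<bullet> c y - Dl p\<bar> < \<bar>Dl p\<bar> / 2" using d(2)[of "(\<xi>, y)"] gp
      by (simp add: g_def dist_real_def)
    thus "Dl p * (R3 \<xi> \<bullet> c y) > 0" "\<bar>R3 \<xi> \<bullet> c y\<bar> < 2 * \<bar>Dl p\<bar>" "\<bar>Dl p\<bar> < 2 * \<bar>R3 \<xi> \<bullet> c y\<bar>"
      using D by (auto simp: abs_if zero_less_mult_iff split: if_splits)
  qed
qed

end

context seg begin

definition "fF s u = (r s - r u) \<bullet> gat u"
definition "eF s u = (r u - r s) \<bullet> gat s"
definition "aF s u = alt s \<bullet> gat u"
definition "bF s u = alt u \<bullet> gat s"

lemma alt_gt: "t0 < s \<Longrightarrow> alt s = al s" by (simp add: alt_def)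
lemma gat_gt: "t0 < s \<Longrightarrow> gat s = ga s" by (simp add: gat_def)

lemma signs_near:
  assumes p: "t0 < p" "p < t1"
  shows "\<exists>u. p < u \<and> u < t1 \<and> Dl p * fF p u < 0 \<and> Dl p * eF p u > 0 \<and> Dl p * aF p u > 0 \<and> Dl p * bF p u > 0"
proof -
  obtain d where d: "d > 0" "\<And>\<xi> y. \<bar>\<xi> - p\<bar> < d \<Longrightarrow> \<bar>y - p\<bar> < d \<Longrightarrow> Dl p * (R3 \<xi> \<bullet> c y) > 0"
    using near[OF p] by blast
  define u where "u = p + min d (t1 - p) / 2"
  have u: "p < u" "u < t1" "u - p < d" using d p by (auto simp: u_def min_def field_simps)
  have nz: "norm (c u) > 0" "norm (c p) > 0" "norm (R1 p) > 0" "norm (R1 u) > 0"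
    using regular[of u] regular[of p] p u by auto
  have pu: "t0 < u" using p u by simp
  obtain \<xi>1 where x1: "p < \<xi>1" "\<xi>1 < u" "(r p - r u) \<bullet> c u = (p - u) ^ 3 / 6 * (R3 \<xi>1 \<bullet> c u)"
    using taylor3[of p u] p u by auto
  obtain \<xi>2 where x2: "p < \<xi>2" "\<xi>2 < u" "(r u - r p) \<bullet> c p = (u - p) ^ 3 / 6 * (R3 \<xi>2 \<bullet> c p)"
    using taylor3[of u p] p u by auto
  obtain \<xi>3 where x3: "p < \<xi>3" "\<xi>3 < u" "R1 p \<bullet> c u = (p - u) ^ 2 / 2 * (R3 \<xi>3 \<bullet> c u)"
    using taylor2[of p u] p u by auto
  obtain \<xi>4 where x4: "p < \<xi>4" "\<xi>4 < u" "R1 u \<bullet> c p = (u - p) ^ 2 / 2 * (R3 \<xi>4 \<bullet> c p)"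
    using taylor2[of u p] p u by auto
  have g1: "Dl p * (R3 \<xi>1 \<bullet> c u) > 0" using d(2) x1 u by simp
  have g2: "Dl p * (R3 \<xi>2 \<bullet> c p) > 0" using d(2) x2 u d(1) by simp
  have g3: "Dl p * (R3 \<xi>3 \<bullet> c u) > 0" using d(2) x3 u by simp
  have g4: "Dl p * (R3 \<xi>4 \<bullet> c p) > 0" using d(2) x4 u d(1) by simp
  have eqF: "Dl p * fF p u = ((p - u) ^ 3 / 6 / norm (c u)) * (Dl p * (R3 \<xi>1 \<bullet> c u))"
    using pu by (simp add: fF_def gat_gt ga_def x1(3) field_simps)
  have "(p - u) ^ 3 / 6 / norm (c u) < 0" using u nz by (simp add: divide_neg_pos)
  hence F: "Dl p * fF p u < 0" unfolding eqF using g1 by (rule mult_neg_pos)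
  have eqE: "Dl p * eF p u = ((u - p) ^ 3 / 6 / norm (c p)) * (Dl p * (R3 \<xi>2 \<bullet> c p))"
    using p by (simp add: eF_def gat_gt ga_def x2(3) field_simps)
  have "(u - p) ^ 3 / 6 / norm (c p) > 0" using u nz by simp
  hence E: "Dl p * eF p u > 0" unfolding eqE using g2 by (rule mult_pos_pos)
  have eqA: "Dl p * aF p u = ((p - u) ^ 2 / 2 / (norm (R1 p) * norm (c u))) * (Dl p * (R3 \<xi>3 \<bullet> c u))"
    using p pu by (simp add: aF_def gat_gt alt_gt ga_def al_def x3(3) field_simps)
  have "(p - u) ^ 2 / 2 / (norm (R1 p) * norm (c u)) > 0" using u nz by simp
  hence A: "Dl p * aF p u > 0" unfolding eqA using g3 by (rule mult_pos_pos)
  have eqB: "Dl p * bF p u = ((u - p) ^ 2 / 2 / (norm (R1 u) * norm (c p))) * (Dl p * (R3 \<xi>4 \<bullet> c p))"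
    using p pu by (simp add: bF_def gat_gt alt_gt ga_def al_def x4(3) field_simps)
  have "(u - p) ^ 2 / 2 / (norm (R1 u) * norm (c p)) > 0" using u nz by simp
  hence B: "Dl p * bF p u > 0" unfolding eqB using g4 by (rule mult_pos_pos)
  show ?thesis using u F E A B by blast
qed

definition "lam s u = ((r u - r s) \<bullet> gat u) / (alt s \<bullet> gat u)"
definition "rho v t = ((r t - r v) \<bullet> gat t) / (alt v \<bullet> gat t)"

lemma cube_swap: "(a - b) ^ 3 = - ((b - a) ^ 3 :: real)"
  by (simp add: power3_eq_cube) algebra

lemma sq_swap: "(a - b) ^ 2 = ((b - a) ^ 2 :: real)"
  by (simp add: power2_eq_square) algebra

lemma frac_cubes: "(h::real) \<noteq> 0 \<Longrightarrow> g3 \<noteq> 0 \<Longrightarrow> (h ^ 3 / 6 * g1) / (h ^ 2 / 2 * g3) * K = h / 3 * K * (g1 / g3)"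
  by (simp add: field_simps power2_eq_square power3_eq_cube)

lemma ratio_bound:
  fixes D g1 g3 K h :: real
  assumes "\<bar>g1\<bar> < 2 * \<bar>D\<bar>" "\<bar>D\<bar> < 2 * \<bar>g3\<bar>" "K > 0" "h > 0"
  shows "\<bar>h / 3 * K * (g1 / g3)\<bar> \<le> 2 * K * h"
proof -
  have g3: "\<bar>g3\<bar> > 0" using assms by linarith
  have "\<bar>g1 / g3\<bar> \<le> 4" using assms g3 by (simp add: abs_divide divide_le_eq)
  have "\<bar>h / 3 * K * (g1 / g3)\<bar> = h / 3 * K * \<bar>g1 / g3\<bar>" using assms by (simp add: abs_mult)
  also have "\<dots> \<le> h / 3 * K * 4" by (rule mult_left_mono[OF \<open>\<bar>g1 / g3\<bar> \<le> 4\<close>]) (use assms in simp)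
  also have "\<dots> \<le> 2 * K * h"
  proof -
    have "h * K > 0" using assms by simp
    thus ?thesis by (simp add: field_simps)
  qed
  finally show ?thesis .
qed

lemma lam_small:
  assumes p: "t0 < p" "p < t1" and e: "\<epsilon> > 0"
  shows "\<exists>u. p < u \<and> u < t1 \<and> \<bar>lam p u\<bar> < \<epsilon>"
proof -
  obtain d where d: "d > 0" "\<And>\<xi> y. \<bar>\<xi> - p\<bar> < d \<Longrightarrow> \<bar>y - p\<bar> < d \<Longrightarrow>
     Dl p * (R3 \<xi> \<bullet> c y) > 0 \<and> \<bar>R3 \<xi> \<bullet> c y\<bar> < 2 * \<bar>Dl p\<bar> \<and> \<bar>Dl p\<bar> < 2 * \<bar>R3 \<xi> \<bullet> c y\<bar>"
    using near[OF p] by blast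
  define K where "K = norm (R1 p)"
  have K: "K > 0" using regular(3)[of p] p by (simp add: K_def)
  define m where "m = min (min d (t1 - p)) (\<epsilon> / (4 * K))"
  have m: "m > 0" "m \<le> d" "m \<le> t1 - p" "m \<le> \<epsilon> / (4 * K)" using d p e K by (auto simp: m_def)
  define u where "u = p + m / 2"
  have u: "p < u" "u < t1" "u - p < d" "u - p < \<epsilon> / (4 * K)"
    using m by (auto simp: u_def)
  have pu: "t0 < u" using p u by simp
  have ncu: "norm (c u) > 0" using regular[of u] pu u by auto
  obtain \<xi>1 where x1: "p < \<xi>1" "\<xi>1 < u" "(r p - r u) \<bullet> c u = (p - u) ^ 3 / 6 * (R3 \<xi>1 \<bullet> c u)"
    using taylor3[of p u] p u by auto
  obtain \<xi>3 where x3: "p < \<xi>3" "\<xi>3 < u" "R1 p \<bullet> c u = (p - u) ^ 2 / 2 * (R3 \<xi>3 \<bullet> c u)"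
    using taylor2[of p u] p u by auto
  have g1: "\<bar>R3 \<xi>1 \<bullet> c u\<bar> < 2 * \<bar>Dl p\<bar>" using d(2)[of \<xi>1 u] x1 u by simp
  have g3: "\<bar>Dl p\<bar> < 2 * \<bar>R3 \<xi>3 \<bullet> c u\<bar>" "R3 \<xi>3 \<bullet> c u \<noteq> 0" using d(2)[of \<xi>3 u] x3 u by auto
  have "lam p u = ((r u - r p) \<bullet> c u) / (R1 p \<bullet> c u) * K"
    using pu p ncu K by (simp add: lam_def gat_gt alt_gt ga_def al_def K_def field_simps)
  also have "\<dots> = (u - p) / 3 * K * ((R3 \<xi>1 \<bullet> c u) / (R3 \<xi>3 \<bullet> c u))"
  proof -
    have "(r u - r p) \<bullet> c u = - ((r p - r u) \<bullet> c u)" by (simp add: inner_diff_left)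
    also have "\<dots> = (u - p) ^ 3 / 6 * (R3 \<xi>1 \<bullet> c u)" unfolding x1(3) cube_swap[of p u]
      by simp
    finally have n: "(r u - r p) \<bullet> c u = (u - p) ^ 3 / 6 * (R3 \<xi>1 \<bullet> c u)" .
    have dd: "R1 p \<bullet> c u = (u - p) ^ 2 / 2 * (R3 \<xi>3 \<bullet> c u)" unfolding x3(3) sq_swap[of p u] ..
    have "u - p \<noteq> 0" using u by simp
    thus ?thesis unfolding n dd using g3(2) by (rule frac_cubes)
  qed
  finally have "\<bar>lam p u\<bar> \<le> 2 * K * (u - p)"
    using ratio_bound[OF g1 g3(1) K, of "u - p"] u(1) by simp
  also have "\<dots> < \<epsilon>"
  proof -
    have "K * (u - p) < \<epsilon> / 4" using u(4) K by (simp add: field_simps)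
    thus ?thesis using e by linarith
  qed
  finally show ?thesis using u by blast
qed

lemma rho_small:
  assumes p: "t0 < p" "p < t1" and e: "\<epsilon> > 0"
  shows "\<exists>t. t0 < t \<and> t < p \<and> \<bar>rho p t\<bar> < \<epsilon>"
proof -
  obtain d where d: "d > 0" "\<And>\<xi> y. \<bar>\<xi> - p\<bar> < d \<Longrightarrow> \<bar>y - p\<bar> < d \<Longrightarrow>
     Dl p * (R3 \<xi> \<bullet> c y) > 0 \<and> \<bar>R3 \<xi> \<bullet> c y\<bar> < 2 * \<bar>Dl p\<bar> \<and> \<bar>Dl p\<bar> < 2 * \<bar>R3 \<xi> \<bullet> c y\<bar>"
    using near[OF p] by blast
  define K where "K = norm (R1 p)"
  have K: "K > 0" using regular(3)[of p] p by (simp add: K_def)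
  define m where "m = min (min d (p - t0)) (\<epsilon> / (4 * K))"
  have m: "m > 0" "m \<le> d" "m \<le> p - t0" "m \<le> \<epsilon> / (4 * K)" using d p e K by (auto simp: m_def)
  define t where "t = p - m / 2"
  have t: "t < p" "t0 < t" "p - t < d" "p - t < \<epsilon> / (4 * K)"
    using m by (auto simp: t_def)
  have nct: "norm (c t) > 0" using regular[of t] t p by auto
  obtain \<xi>1 where x1: "t < \<xi>1" "\<xi>1 < p" "(r p - r t) \<bullet> c t = (p - t) ^ 3 / 6 * (R3 \<xi>1 \<bullet> c t)"
    using taylor3[of p t] p t by auto
  obtain \<xi>3 where x3: "t < \<xi>3" "\<xi>3 < p" "R1 p \<bullet> c t = (p - t) ^ 2 / 2 * (R3 \<xi>3 \<bullet> c t)"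
    using taylor2[of p t] p t by auto
  have g1: "\<bar>R3 \<xi>1 \<bullet> c t\<bar> < 2 * \<bar>Dl p\<bar>" using d(2)[of \<xi>1 t] x1 t by simp
  have g3: "\<bar>Dl p\<bar> < 2 * \<bar>R3 \<xi>3 \<bullet> c t\<bar>" "R3 \<xi>3 \<bullet> c t \<noteq> 0" using d(2)[of \<xi>3 t] x3 t by auto
  have "rho p t = ((r t - r p) \<bullet> c t) / (R1 p \<bullet> c t) * K"
    using t p nct K by (simp add: rho_def gat_gt alt_gt ga_def al_def K_def field_simps)
  also have "\<dots> = - ((p - t) / 3 * K * ((R3 \<xi>1 \<bullet> c t) / (R3 \<xi>3 \<bullet> c t)))"
  proof -
    have n: "(r t - r p) \<bullet> c t = - ((p - t) ^ 3 / 6 * (R3 \<xi>1 \<bullet> c t))" 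
      unfolding x1(3)[symmetric] by (simp add: inner_diff_left)
    have "p - t \<noteq> 0" using t by simp
    from frac_cubes[OF this g3(2), of "R3 \<xi>1 \<bullet> c t" K]
    show ?thesis unfolding n x3(3) by simp
  qed
  finally have "\<bar>rho p t\<bar> \<le> 2 * K * (p - t)"
    using ratio_bound[OF g1 g3(1) K, of "p - t"] t(1) by simp
  also have "\<dots> < \<epsilon>"
  proof -
    have "K * (p - t) < \<epsilon> / 4" using t(4) K by (simp add: field_simps)
    thus ?thesis using e by linarith
  qed
  finally show ?thesis using t by blast
qed

end

lemma bb_cross: "bounded_bilinear (cross3 :: real^3 \<Rightarrow> real^3 \<Rightarrow> real^3)"
  using bilinear_cross bilinear_conv_bounded_bilinear by blast

lemma triple_cyclic: "cross3 x y \<bullet> (z :: real^3) = cross3 z x \<bullet> y"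
  by (simp add: cross3_simps)

lemma trip_aux: "cross3 (x - v) a \<bullet> R = - (cross3 R (v - x) \<bullet> (a :: real^3))"
  by (simp add: cross3_simps)

lemma rolle_ne:
  fixes F :: "real \<Rightarrow> real"
  assumes "a < b" "continuous_on {a..b} F"
    "\<And>x. a < x \<Longrightarrow> x < b \<Longrightarrow> (F has_real_derivative F' x) (at x)"
    "\<And>x. a < x \<Longrightarrow> x < b \<Longrightarrow> F' x \<noteq> 0"
  shows "F a \<noteq> F b"
proof
  assume "F a = F b"
  then obtain z where z: "a < z" "z < b" "DERIV F z :> 0"
    using Rolle[OF assms(1) _ assms(2)] assms(3) real_differentiable_def by blast
  have "F' z = 0" using DERIV_unique[OF assms(3)[OF z(1,2)] z(3)] .
  thus False using assms(4)[OF z(1,2)] by simp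
qed

context seg begin

definition "c' t = cross3 (R1 t) (R3 t)"

lemma c_deriv: "t \<in> U \<Longrightarrow> (c has_vector_derivative c' t) (at t)"
proof -
  assume t: "t \<in> U"
  have "((\<lambda>t. cross3 (R1 t) (R2 t)) has_vector_derivative cross3 (R1 t) (R3 t) + cross3 (R2 t) (R2 t)) (at t)"
    by (rule bounded_bilinear.has_vector_derivative[OF bb_cross der1[OF t] der2[OF t]])
  thus ?thesis by (simp add: c_def[abs_def] c'_def)
qed

definition "Mf A w u = ((r u - A) \<bullet> c u) / (w \<bullet> c u)"

lemma Mf_deriv:
  assumes t: "t \<in> U" and w: "w \<bullet> c t \<noteq> 0"
  shows "(Mf A w has_real_derivative
     (((r t - A) \<bullet> c' t) * (w \<bullet> c t) - ((r t - A) \<bullet> c t) * (w \<bullet> c' t)) / ((w \<bullet> c t) * (w \<bullet> c t))) (at t)"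
proof -
  have 1: "((\<lambda>u. r u - A) has_vector_derivative R1 t - 0) (at t)"
    by (intro has_vector_derivative_diff der0 t has_vector_derivative_const)
  have "((\<lambda>u. (r u - A) \<bullet> c u) has_vector_derivative (r t - A) \<bullet> c' t + (R1 t - 0) \<bullet> c t) (at t)"
    by (rule bounded_bilinear.has_vector_derivative[OF bounded_bilinear_inner 1 c_deriv[OF t]])
  hence N: "((\<lambda>u. (r u - A) \<bullet> c u) has_real_derivative (r t - A) \<bullet> c' t) (at t)"
    by (simp add: has_real_derivative_iff_has_vector_derivative c_def dot_cross_self)
  have "((\<lambda>u. w \<bullet> c u) has_vector_derivative w \<bullet> c' t + 0 \<bullet> c t) (at t)"
    by (rule bounded_bilinear.has_vector_derivative[OF bounded_bilinear_inner has_vector_derivative_const c_deriv[OF t]])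
  hence D: "((\<lambda>u. w \<bullet> c u) has_real_derivative w \<bullet> c' t) (at t)"
    by (simp add: has_real_derivative_iff_has_vector_derivative)
  show ?thesis unfolding Mf_def[abs_def]
    by (rule DERIV_divide[OF N D w])
qed

lemma Mf_num:
  "((r t - A) \<bullet> c' t) * (w \<bullet> c t) - ((r t - A) \<bullet> c t) * (w \<bullet> c' t)
     = - Dl t * (cross3 (r t - A) w \<bullet> R1 t)"
  unfolding c'_def c_def Dl_def by (rule deriv_num_identity)

definition "Md A w t = (((r t - A) \<bullet> c' t) * (w \<bullet> c t) - ((r t - A) \<bullet> c t) * (w \<bullet> c' t)) / ((w \<bullet> c t) * (w \<bullet> c t))"

lemma Md_ne:
  assumes w: "w \<bullet> c t \<noteq> 0" and D: "Dl t \<noteq> 0"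
    and x: "cross3 (r t - A) w \<bullet> R1 t \<noteq> 0"
  shows "Md A w t \<noteq> 0"
  using Mf_num[of t A w] w D x by (simp add: Md_def)

lemma cont_r: "continuous_on {t0..t1} r"
  using sub by (intro continuous_at_imp_continuous_on) (auto intro: isCont_r)

lemma lam_Mf: "u \<le> t1 \<Longrightarrow> t0 < u \<Longrightarrow> lam s u = Mf (r s) (alt s) u"
  using regular(1)[of u] by (simp add: lam_def Mf_def gat_gt ga_def)

lemma rho_Mf: "t0 < t \<Longrightarrow> t \<le> t1 \<Longrightarrow> rho v t = Mf (r v) (alt v) t"
  using regular(1)[of t] by (simp add: rho_def Mf_def gat_gt ga_def)

lemma lam_ne:
  assumes "t0 \<le> s" "s < a" "a < b" "b \<le> t1"
  shows "lam s a \<noteq> lam s b"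
proof (rule rolle_ne[OF assms(3), where F'="Md (r s) (alt s)"])
  have cr: "continuous_on {a..b} r" by (rule continuous_on_subset[OF cont_r]) (use assms in auto)
  have cg: "continuous_on {a..b} gat" by (rule continuous_on_subset[OF gat_cont]) (use assms in auto)
  have nz: "\<forall>x\<in>{a..b}. alt s \<bullet> gat x \<noteq> 0" using conds(1)[of s] assms by auto
  have "continuous_on {a..b} (\<lambda>u. ((r u - r s) \<bullet> gat u) / (alt s \<bullet> gat u))"
    using cr cg nz by (intro continuous_intros) auto
  thus "continuous_on {a..b} (lam s)" by (simp add: lam_def[abs_def])
next
  fix x assume x: "a < x" "x < b"
  have xU: "x \<in> U" using x assms by (intro inU) auto
  have w: "alt s \<bullet> c x \<noteq> 0"
    using conds(1)[of s x] assms x regular(1)[of x] by (auto simp: gat_gt ga_def)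
  have D: "Dl x \<noteq> 0" using regular(2)[of x] assms x by auto
  have "cross3 (alt s) (r x - r s) \<bullet> alt x \<noteq> 0" using conds(3)[of s x] assms x by auto
  hence X: "cross3 (r x - r s) (alt s) \<bullet> R1 x \<noteq> 0"
    using regular(3)[of x] assms x
    by (auto simp: alt_gt al_def cross_skew[of "r x - r s"])
  show "Md (r s) (alt s) x \<noteq> 0" by (rule Md_ne[OF w D X])
  have "(Mf (r s) (alt s) has_real_derivative Md (r s) (alt s) x) (at x)"
    unfolding Md_def by (rule Mf_deriv[OF xU w])
  thus "(lam s has_real_derivative Md (r s) (alt s) x) (at x)"
    by (rule has_field_derivative_transform_within_open[where S="{t0<..<t1}"])
       (use assms x lam_Mf in auto)
qed

lemma rho_ne:
  assumes "t0 \<le> a" "a < b" "b < v" "v \<le> t1"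
  shows "rho v a \<noteq> rho v b"
proof (rule rolle_ne[OF assms(2), where F'="Md (r v) (alt v)"])
  have cr: "continuous_on {a..b} r" by (rule continuous_on_subset[OF cont_r]) (use assms in auto)
  have cg: "continuous_on {a..b} gat" by (rule continuous_on_subset[OF gat_cont]) (use assms in auto)
  have nz: "\<forall>x\<in>{a..b}. alt v \<bullet> gat x \<noteq> 0" using conds(2)[of _ v] assms by auto
  have "continuous_on {a..b} (\<lambda>t. ((r t - r v) \<bullet> gat t) / (alt v \<bullet> gat t))"
    using cr cg nz by (intro continuous_intros) auto
  thus "continuous_on {a..b} (rho v)" by (simp add: rho_def[abs_def])
next
  fix x assume x: "a < x" "x < b"
  have xU: "x \<in> U" using x assms by (intro inU) auto
  have w: "alt v \<bullet> c x \<noteq> 0"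
    using conds(2)[of x v] assms x regular(1)[of x] by (auto simp: gat_gt ga_def)
  have D: "Dl x \<noteq> 0" using regular(2)[of x] assms x by auto
  have "cross3 (alt x) (r v - r x) \<bullet> alt v \<noteq> 0" using conds(3)[of x v] assms x by auto
  hence X: "cross3 (r x - r v) (alt v) \<bullet> R1 x \<noteq> 0"
    using regular(3)[of x] assms x
  proof -
    have R: "R1 x = norm (R1 x) *\<^sub>R al x" using regular(3)[of x] assms x by (simp add: al_def)
    have "cross3 (r x - r v) (alt v) \<bullet> R1 x = - (norm (R1 x) * (cross3 (al x) (r v - r x) \<bullet> alt v))"
      by (subst R, simp only: trip_aux inner_scaleR_right cross_mult_left inner_scaleR_left)
    thus ?thesis using \<open>cross3 (alt x) (r v - r x) \<bullet> alt v \<noteq> 0\<close> regular(3)[of x] assms x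
      by (simp add: alt_gt)
  qed
  show "Md (r v) (alt v) x \<noteq> 0" by (rule Md_ne[OF w D X])
  have "(Mf (r v) (alt v) has_real_derivative Md (r v) (alt v) x) (at x)"
    unfolding Md_def by (rule Mf_deriv[OF xU w])
  thus "(rho v has_real_derivative Md (r v) (alt v) x) (at x)"
    by (rule has_field_derivative_transform_within_open[where S="{t0<..<t1}"])
       (use assms x rho_Mf in auto)
qed

end

lemma convex_tri1: "convex {z :: real \<times> real. a \<le> fst z \<and> fst z < snd z \<and> snd z \<le> b}"
proof -
  have "{z :: real \<times> real. a \<le> fst z \<and> fst z < snd z \<and> snd z \<le> b} =
        {z. (-1, 0) \<bullet> z \<le> -a} \<inter> {z. (1, -1) \<bullet> z < 0} \<inter> {z. (0, 1) \<bullet> z \<le> b}"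
    by (auto simp: inner_Pair)
  thus ?thesis by (auto intro!: convex_Int convex_halfspace_le convex_halfspace_lt)
qed

lemma convex_tri2: "convex {z :: real \<times> real. a \<le> fst z \<and> fst z < snd z \<and> snd z < b}"
proof -
  have "{z :: real \<times> real. a \<le> fst z \<and> fst z < snd z \<and> snd z < b} =
        {z. (-1, 0) \<bullet> z \<le> -a} \<inter> {z. (1, -1) \<bullet> z < 0} \<inter> {z. (0, 1) \<bullet> z < b}"
    by (auto simp: inner_Pair)
  thus ?thesis by (auto intro!: convex_Int convex_halfspace_le convex_halfspace_lt)
qed

lemma convex_tri3: "convex {z :: real \<times> real. a < fst z \<and> fst z < snd z \<and> snd z \<le> b}"
proof -
  have "{z :: real \<times> real. a < fst z \<and> fst z < snd z \<and> snd z \<le> b} =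
        {z. (-1, 0) \<bullet> z < -a} \<inter> {z. (1, -1) \<bullet> z < 0} \<inter> {z. (0, 1) \<bullet> z \<le> b}"
    by (auto simp: inner_Pair)
  thus ?thesis by (auto intro!: convex_Int convex_halfspace_le convex_halfspace_lt)
qed

context seg begin

definition "T = {z :: real \<times> real. t0 \<le> fst z \<and> fst z < snd z \<and> snd z \<le> t1}"

lemma connT: "connected T" unfolding T_def by (rule convex_connected[OF convex_tri1])

lemma cfst: "continuous_on {t0..t1} g \<Longrightarrow> (\<And>z. z \<in> S \<Longrightarrow> fst z \<in> {t0..t1}) \<Longrightarrow> continuous_on S (\<lambda>z. g (fst z))"
  by (rule continuous_on_compose2[of "{t0..t1}" g S fst]) (auto intro: continuous_intros)
lemma csnd: "continuous_on {t0..t1} g \<Longrightarrow> (\<And>z. z \<in> S \<Longrightarrow> snd z \<in> {t0..t1}) \<Longrightarrow> continuous_on S (\<lambda>z. g (snd z))"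
  by (rule continuous_on_compose2[of "{t0..t1}" g S snd]) (auto intro: continuous_intros)

lemma T_mem: "z \<in> T \<Longrightarrow> fst z \<in> {t0..t1} \<and> snd z \<in> {t0..t1}" by (auto simp: T_def)

lemma cT_r1: "continuous_on T (\<lambda>z. r (fst z))" by (rule cfst[OF cont_r]) (use T_mem in auto)
lemma cT_r2: "continuous_on T (\<lambda>z. r (snd z))" by (rule csnd[OF cont_r]) (use T_mem in auto)
lemma cT_a1: "continuous_on T (\<lambda>z. alt (fst z))" by (rule cfst[OF alt_cont]) (use T_mem in auto)
lemma cT_a2: "continuous_on T (\<lambda>z. alt (snd z))" by (rule csnd[OF alt_cont]) (use T_mem in auto)
lemma cT_g1: "continuous_on T (\<lambda>z. gat (fst z))" by (rule cfst[OF gat_cont]) (use T_mem in auto)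
lemma cT_g2: "continuous_on T (\<lambda>z. gat (snd z))" by (rule csnd[OF gat_cont]) (use T_mem in auto)

lemmas cT = cT_r1 cT_r2 cT_a1 cT_a2 cT_g1 cT_g2

lemma condsT: "z \<in> T \<Longrightarrow> fF (fst z) (snd z) \<noteq> 0 \<and> eF (fst z) (snd z) \<noteq> 0 \<and> aF (fst z) (snd z) \<noteq> 0 \<and> bF (fst z) (snd z) \<noteq> 0"
  using conds[of "fst z" "snd z"] by (auto simp: T_def fF_def eF_def aF_def bF_def)

lemma const_on_T:
  assumes "continuous_on T (\<lambda>z. F (fst z) (snd z))" "\<And>z. z \<in> T \<Longrightarrow> F (fst z) (snd z) \<noteq> (0::real)"
    "t0 \<le> s" "s < u" "u \<le> t1" "t0 \<le> s'" "s' < u'" "u' \<le> t1"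
  shows "F s u > 0 \<longleftrightarrow> F s' u' > 0"
  using sign_const'[OF connT assms(1), of "(s, u)" "(s', u')"] assms(2-) by (auto simp: T_def)

lemma cF: "continuous_on T (\<lambda>z. fF (fst z) (snd z))" unfolding fF_def by (intro continuous_intros cT)
lemma cE: "continuous_on T (\<lambda>z. eF (fst z) (snd z))" unfolding eF_def by (intro continuous_intros cT)
lemma cA: "continuous_on T (\<lambda>z. aF (fst z) (snd z))" unfolding aF_def by (intro continuous_intros cT)
lemma cB: "continuous_on T (\<lambda>z. bF (fst z) (snd z))" unfolding bF_def by (intro continuous_intros cT)

lemma mid: "t0 < (t0 + t1) / 2" "(t0 + t1) / 2 < t1" using t01 by auto

lemma signs_global:
  assumes "t0 \<le> s" "s < u" "u \<le> t1" "t0 \<le> s'" "s' < u'" "u' \<le> t1"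
  shows "fF s u > 0 \<longleftrightarrow> eF s' u' < 0" "aF s u > 0 \<longleftrightarrow> bF s' u' > 0"
proof -
  define p where "p = (t0 + t1) / 2"
  obtain v where v: "p < v" "v < t1" "Dl p * fF p v < 0" "Dl p * eF p v > 0" "Dl p * aF p v > 0" "Dl p * bF p v > 0"
    using signs_near[of p] mid by (auto simp: p_def)
  have pv: "t0 \<le> p" "p < v" "v \<le> t1" using mid v by (auto simp: p_def)
  have Dp: "Dl p \<noteq> 0" using v(4) by auto
  have f1: "fF s u > 0 \<longleftrightarrow> fF p v > 0" by (rule const_on_T[OF cF]) (use condsT assms pv in auto)
  have e1: "eF s' u' > 0 \<longleftrightarrow> eF p v > 0" by (rule const_on_T[OF cE]) (use condsT assms pv in auto)
  have a1: "aF s u > 0 \<longleftrightarrow> aF p v > 0" by (rule const_on_T[OF cA]) (use condsT assms pv in auto)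
  have b1: "bF s' u' > 0 \<longleftrightarrow> bF p v > 0" by (rule const_on_T[OF cB]) (use condsT assms pv in auto)
  have ne: "eF s' u' \<noteq> 0" using condsT[of "(s', u')"] assms by (auto simp: T_def)
  have "fF p v > 0 \<longleftrightarrow> eF p v < 0" using v(3,4) Dp
    by (cases "Dl p > 0") (auto simp: mult_less_0_iff zero_less_mult_iff)
  moreover have "eF s' u' < 0 \<longleftrightarrow> \<not> eF s' u' > 0" using ne by auto
  moreover have "eF p v < 0 \<longleftrightarrow> \<not> eF p v > 0" using v(4) Dp by (auto simp: zero_less_mult_iff)
  ultimately show "fF s u > 0 \<longleftrightarrow> eF s' u' < 0" using f1 e1 by blast
  have "aF p v > 0 \<longleftrightarrow> bF p v > 0" using v(5,6) Dp
    by (cases "Dl p > 0") (auto simp: zero_less_mult_iff)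
  thus "aF s u > 0 \<longleftrightarrow> bF s' u' > 0" using a1 b1 by blast
qed

end

context seg begin

lemma lam_alt: "lam s u = - fF s u / aF s u"
  by (simp add: lam_def fF_def aF_def inner_diff_left)
lemma rho_alt: "rho v t = - eF t v / bF t v"
  by (simp add: rho_def eF_def bF_def inner_diff_left)

lemma lam_nz: "t0 \<le> s \<Longrightarrow> s < u \<Longrightarrow> u \<le> t1 \<Longrightarrow> lam s u \<noteq> 0"
  using condsT[of "(s, u)"] by (simp add: lam_alt T_def)
lemma rho_nz: "t0 \<le> t \<Longrightarrow> t < v \<Longrightarrow> v \<le> t1 \<Longrightarrow> rho v t \<noteq> 0"
  using condsT[of "(t, v)"] by (simp add: rho_alt T_def)

lemma cLam: "continuous_on T (\<lambda>z. lam (fst z) (snd z))"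
  unfolding lam_alt using condsT by (intro continuous_intros cF cA) auto
lemma cRho: "continuous_on T (\<lambda>z. rho (snd z) (fst z))"
  unfolding rho_alt using condsT by (intro continuous_intros cE cB) auto

lemma lam_sign:
  assumes "t0 \<le> s" "s < u" "u \<le> t1" "t0 \<le> s'" "s' < u'" "u' \<le> t1"
  shows "lam s u > 0 \<longleftrightarrow> lam s' u' > 0"
  by (rule const_on_T[OF cLam]) (use lam_nz assms in \<open>auto simp: T_def\<close>)
lemma rho_sign:
  assumes "t0 \<le> s" "s < u" "u \<le> t1" "t0 \<le> s'" "s' < u'" "u' \<le> t1"
  shows "rho u s > 0 \<longleftrightarrow> rho u' s' > 0"
  using const_on_T[OF cRho, of s u s' u'] rho_nz assms by (auto simp: T_def)

lemma quot_pos: "x \<noteq> 0 \<Longrightarrow> y \<noteq> 0 \<Longrightarrow> (x > 0 \<longleftrightarrow> y > 0) \<Longrightarrow> x / y > (0::real)"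
  by (cases "x > 0"; cases "y > 0") (auto simp: divide_pos_pos divide_neg_neg)

lemma k1_range:
  assumes t: "t0 < t" "t < t1"
  shows "0 < lam t0 t / lam t0 t1 \<and> lam t0 t / lam t0 t1 < 1"
proof -
  define R where "R = {z :: real \<times> real. t0 \<le> fst z \<and> fst z < snd z \<and> snd z < t1}"
  define G where "G z = lam (fst z) (snd z) / lam (fst z) t1 - 1" for z
  have RT: "R \<subseteq> T" by (auto simp: R_def T_def)
  have pos: "lam (fst z) (snd z) / lam (fst z) t1 > 0" if "z \<in> R" for z
    using that lam_nz[of "fst z" "snd z"] lam_nz[of "fst z" t1] lam_sign[of "fst z" "snd z" "fst z" t1]
    by (intro quot_pos) (auto simp: R_def)
  have ne: "G z \<noteq> 0" if "z \<in> R" for z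
  proof -
    have "lam (fst z) (snd z) \<noteq> lam (fst z) t1" using lam_ne[of "fst z" "snd z" t1] that by (auto simp: R_def)
    moreover have "lam (fst z) t1 \<noteq> 0" using lam_nz[of "fst z" t1] that by (auto simp: R_def)
    ultimately show ?thesis by (simp add: G_def)
  qed
  have cG: "continuous_on R G"
  proof -
    have 1: "continuous_on R (\<lambda>z. lam (fst z) (snd z))" using cLam RT by (rule continuous_on_subset)
    have 2: "continuous_on R (\<lambda>z. lam (fst z) t1)"
    proof -
      have "continuous_on R (\<lambda>z. ((r t1 - r (fst z)) \<bullet> gat t1) / (alt (fst z) \<bullet> gat t1))"
        using conds(1)[of _ t1]
        by (intro continuous_intros cfst[OF cont_r] cfst[OF alt_cont]) (auto simp: R_def)
      thus ?thesis by (simp add: lam_def)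
    qed
    show ?thesis unfolding G_def using lam_nz[of _ t1]
      by (intro continuous_intros 1 2) (auto simp: R_def)
  qed
  have connR: "connected R" unfolding R_def by (rule convex_connected[OF convex_tri2])
  define p where "p = (t0 + t1) / 2"
  have p: "t0 < p" "p < t1" using mid by (auto simp: p_def)
  have lp: "lam p t1 \<noteq> 0" using lam_nz[of p t1] p by auto
  obtain u where u: "p < u" "u < t1" "\<bar>lam p u\<bar> < \<bar>lam p t1\<bar>"
    using lam_small[OF p, of "\<bar>lam p t1\<bar>"] lp by auto
  have "G (p, u) < 0"
  proof -
    have "lam p u / lam p t1 > 0" using pos[of "(p, u)"] u p by (auto simp: R_def)
    moreover have "\<bar>lam p u / lam p t1\<bar> < 1" using u(3) lp by (simp add: abs_divide)
    ultimately have "lam p u / lam p t1 < 1" by linarith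
    thus ?thesis by (simp add: G_def)
  qed
  hence "G (t0, t) < 0"
  proof -
    have m1: "(t0, t) \<in> R" "(p, u) \<in> R" using p u t by (auto simp: R_def)
    have all: "\<forall>x\<in>R. G x \<noteq> 0" using ne by blast
    have "G (t0, t) > 0 \<longleftrightarrow> G (p, u) > 0" by (rule sign_const'[OF connR cG all m1])
    thus ?thesis using \<open>G (p, u) < 0\<close> ne[OF m1(1)] by linarith
  qed
  thus ?thesis using pos[of "(t0, t)"] t by (auto simp: G_def R_def)
qed

lemma k3_range:
  assumes t: "t0 < t" "t < t1"
  shows "0 < rho t1 t / rho t1 t0 \<and> rho t1 t / rho t1 t0 < 1"
proof -
  define R where "R = {z :: real \<times> real. t0 < fst z \<and> fst z < snd z \<and> snd z \<le> t1}"
  define G where "G z = rho (snd z) (fst z) / rho (snd z) t0 - 1" for z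
  have RT: "R \<subseteq> T" by (auto simp: R_def T_def)
  have pos: "rho (snd z) (fst z) / rho (snd z) t0 > 0" if "z \<in> R" for z
    using that rho_nz[of "fst z" "snd z"] rho_nz[of t0 "snd z"] rho_sign[of "fst z" "snd z" t0 "snd z"]
    by (intro quot_pos) (auto simp: R_def)
  have ne: "G z \<noteq> 0" if "z \<in> R" for z
  proof -
    have "rho (snd z) t0 \<noteq> rho (snd z) (fst z)" using rho_ne[of t0 "fst z" "snd z"] that by (auto simp: R_def)
    moreover have "rho (snd z) t0 \<noteq> 0" using rho_nz[of t0 "snd z"] that by (auto simp: R_def)
    ultimately show ?thesis by (simp add: G_def)
  qed
  have cG: "continuous_on R G"
  proof -
    have 1: "continuous_on R (\<lambda>z. rho (snd z) (fst z))" using cRho RT by (rule continuous_on_subset)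
    have 2: "continuous_on R (\<lambda>z. rho (snd z) t0)"
    proof -
      have "continuous_on R (\<lambda>z. ((r t0 - r (snd z)) \<bullet> gat t0) / (alt (snd z) \<bullet> gat t0))"
        using conds(2)[of t0]
        by (intro continuous_intros csnd[OF cont_r] csnd[OF alt_cont]) (auto simp: R_def)
      thus ?thesis by (simp add: rho_def)
    qed
    show ?thesis unfolding G_def using rho_nz[of t0]
      by (intro continuous_intros 1 2) (auto simp: R_def)
  qed
  have connR: "connected R" unfolding R_def by (rule convex_connected[OF convex_tri3])
  define p where "p = (t0 + t1) / 2"
  have p: "t0 < p" "p < t1" using mid by (auto simp: p_def)
  have lp: "rho p t0 \<noteq> 0" using rho_nz[of t0 p] p by auto
  obtain u where u: "t0 < u" "u < p" "\<bar>rho p u\<bar> < \<bar>rho p t0\<bar>"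
    using rho_small[OF p, of "\<bar>rho p t0\<bar>"] lp by auto
  have "G (u, p) < 0"
  proof -
    have "rho p u / rho p t0 > 0" using pos[of "(u, p)"] u p by (auto simp: R_def)
    moreover have "\<bar>rho p u / rho p t0\<bar> < 1" using u(3) lp by (simp add: abs_divide)
    ultimately have "rho p u / rho p t0 < 1" by linarith
    thus ?thesis by (simp add: G_def)
  qed
  hence "G (t, t1) < 0"
  proof -
    have m1: "(t, t1) \<in> R" "(u, p) \<in> R" using p u t by (auto simp: R_def)
    have all: "\<forall>x\<in>R. G x \<noteq> 0" using ne by blast
    have "G (t, t1) > 0 \<longleftrightarrow> G (u, p) > 0" by (rule sign_const'[OF connR cG all m1])
    thus ?thesis using \<open>G (u, p) < 0\<close> ne[OF m1(1)] by linarith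
  qed
  thus ?thesis using pos[of "(t, t1)"] t by (auto simp: G_def R_def)
qed

end

lemma the_plane_line:
  fixes A B P g :: "real ^ 3"
  assumes "(B - A) \<bullet> g \<noteq> 0"
  shows "(THE X. X \<in> {X. (X - P) \<bullet> g = 0} \<inter> line_through A B) = A + (((P - A) \<bullet> g) / ((B - A) \<bullet> g)) *\<^sub>R (B - A)"
proof (rule the_equality)
  have 1: "A + (((P - A) \<bullet> g) / ((B - A) \<bullet> g)) *\<^sub>R (B - A) \<in> line_through A B"
    unfolding line_through_def by blast
  have gen: "((A + m *\<^sub>R (B - A)) - P) \<bullet> g = (A - P) \<bullet> g + m * ((B - A) \<bullet> g)" for m
    by (simp add: inner_diff_left inner_add_left algebra_simps)
  have "((A + (((P - A) \<bullet> g) / ((B - A) \<bullet> g)) *\<^sub>R (B - A)) - P) \<bullet> g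
      = (A - P) \<bullet> g + (((P - A) \<bullet> g) / ((B - A) \<bullet> g)) * ((B - A) \<bullet> g)"
    by (rule gen)
  also have "\<dots> = 0" using assms by (simp add: inner_diff_left)
  finally show "A + (((P - A) \<bullet> g) / ((B - A) \<bullet> g)) *\<^sub>R (B - A) \<in> {X. (X - P) \<bullet> g = 0} \<inter> line_through A B"
    using 1 by blast
  fix X assume "X \<in> {X. (X - P) \<bullet> g = 0} \<inter> line_through A B"
  then obtain m where X: "X = A + m *\<^sub>R (B - A)" "(X - P) \<bullet> g = 0" by (auto simp: line_through_def)
  hence "(A - P) \<bullet> g + m * ((B - A) \<bullet> g) = 0" by (simp add: inner_diff_left inner_add_left)
  hence "m = ((P - A) \<bullet> g) / ((B - A) \<bullet> g)" using assms by (simp add: field_simps inner_diff_left)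
  thus "X = A + (((P - A) \<bullet> g) / ((B - A) \<bullet> g)) *\<^sub>R (B - A)" using X by simp
qed

lemma dist_ratio:
  fixes A B :: "real ^ 3"
  assumes "B \<noteq> A"
  shows "dist B (A + m *\<^sub>R (B - A)) / dist B A = \<bar>1 - m\<bar>"
proof -
  have "B - (A + m *\<^sub>R (B - A)) = (1 - m) *\<^sub>R (B - A)" by (simp add: algebra_simps)
  hence "dist B (A + m *\<^sub>R (B - A)) = \<bar>1 - m\<bar> * norm (B - A)" by (simp add: dist_norm)
  moreover have "dist B A = norm (B - A)" by (simp add: dist_norm)
  ultimately show ?thesis using assms by simp
qed

lemma mono_affine:
  fixes f :: "real \<Rightarrow> real"
  assumes "strict_mono_on S f \<or> strict_antimono_on S f"
  shows "mono_on S (\<lambda>t. a + b * f t) \<or> antimono_on S (\<lambda>t. a + b * f t)"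
proof -
  have m: "mono_on S f \<or> antimono_on S f"
  proof (cases "strict_mono_on S f")
    case True thus ?thesis using strict_mono_on_imp_mono_on by blast
  next
    case False
    hence sa: "strict_antimono_on S f" using assms by blast
    have "antimono_on S f"
    proof (rule monotone_onI)
      fix x y assume "x \<in> S" "y \<in> S" "x \<le> y"
      thus "f x \<ge> f y" using sa by (cases "x = y") (auto simp: monotone_on_def less_le)
    qed
    thus ?thesis by blast
  qed
  show ?thesis
  proof (cases "b \<ge> 0")
    case True
    thus ?thesis using m by (auto simp: monotone_on_def intro: mult_left_mono)
  next
    case False
    thus ?thesis using m by (auto simp: monotone_on_def intro: mult_left_mono_neg)
  qed
qed

context seg begin

definition "L1 = lam t0 t1"
definition "nu = rho t1 t0"
definition "V1 = r t0 + L1 *\<^sub>R alt t0"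
definition "V2 = r t1 + nu *\<^sub>R alt t1"

lemma orth0: "alt t0 \<bullet> gat t0 = 0" using a0_g0 by (simp add: alt_def gat_def)
lemma orth1: "alt t1 \<bullet> gat t1 = 0" using al_ga_orth[OF t1U] t01 by (simp add: alt_gt gat_gt)

lemma a0g1: "alt t0 \<bullet> gat t1 \<noteq> 0" using conds(1)[of t0 t1] t01 by simp
lemma a1g0: "alt t1 \<bullet> gat t0 \<noteq> 0" using conds(2)[of t0 t1] t01 by simp

lemma V1_planes: "(V1 - r t0) \<bullet> gat t0 = 0" "(V1 - r t1) \<bullet> gat t1 = 0"
  using orth0 a0g1
  by (auto simp: V1_def L1_def lam_def inner_diff_left inner_add_left field_simps)
lemma V2_planes: "(V2 - r t1) \<bullet> gat t1 = 0" "(V2 - r t0) \<bullet> gat t0 = 0"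
  using orth1 a1g0
  by (auto simp: V2_def nu_def rho_def inner_diff_left inner_add_left field_simps)

lemma vert0: "tet_vertex r t0 t1 0 = r t0" by (simp add: tet_vertex_def)
lemma vert3: "tet_vertex r t0 t1 3 = r t1" by (simp add: tet_vertex_def)

lemma vert1: "tet_vertex r t0 t1 1 = V1"
proof -
  have ap: "alpha_plus r t0 = alt t0" "gamma_plus r t0 = gat t0" using alt_plus[of t0] t01 by auto
  have gm: "gamma_minus r t1 = gat t1" using alt_minus[of t1] t01 by auto
  show ?thesis
    unfolding tet_vertex_def Let_def
  proof (simp, rule the_equality)
    show "V1 \<in> tangent_line_plus r t0 \<and> V1 \<in> osc_plane_plus r t0 \<and> V1 \<in> osc_plane_minus r t1"
      using V1_planes by (auto simp: tangent_line_plus_def osc_plane_plus_def osc_plane_minus_def ap gm V1_def)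
    fix X assume "X \<in> tangent_line_plus r t0 \<and> X \<in> osc_plane_plus r t0 \<and> X \<in> osc_plane_minus r t1"
    then obtain m where X: "X = r t0 + m *\<^sub>R alt t0" "(X - r t1) \<bullet> gat t1 = 0"
      by (auto simp: tangent_line_plus_def osc_plane_minus_def ap gm)
    have "(r t0 - r t1) \<bullet> gat t1 + m * (alt t0 \<bullet> gat t1) = 0"
      using X by (simp add: inner_diff_left inner_add_left)
    hence "m = L1" using a0g1 by (simp add: L1_def lam_def field_simps inner_diff_left)
    thus "X = V1" using X by (simp add: V1_def)
  qed
qed

lemma vert2: "tet_vertex r t0 t1 2 = V2"
proof -
  have ap: "gamma_plus r t0 = gat t0" using alt_plus[of t0] t01 by auto
  have gm: "gamma_minus r t1 = gat t1" "alpha_minus r t1 = alt t1" using alt_minus[of t1] t01 by auto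
  show ?thesis
    unfolding tet_vertex_def Let_def
  proof (simp, rule the_equality)
    show "V2 \<in> tangent_line_minus r t1 \<and> V2 \<in> osc_plane_plus r t0 \<and> V2 \<in> osc_plane_minus r t1"
      using V2_planes by (auto simp: tangent_line_minus_def osc_plane_plus_def osc_plane_minus_def ap gm V2_def)
    fix X assume "X \<in> tangent_line_minus r t1 \<and> X \<in> osc_plane_plus r t0 \<and> X \<in> osc_plane_minus r t1"
    then obtain m where X: "X = r t1 + m *\<^sub>R alt t1" "(X - r t0) \<bullet> gat t0 = 0"
      by (auto simp: tangent_line_minus_def osc_plane_plus_def ap gm)
    have "(r t1 - r t0) \<bullet> gat t0 + m * (alt t1 \<bullet> gat t0) = 0"
      using X by (simp add: inner_diff_left inner_add_left)
    hence "m = nu" using a1g0 by (simp add: nu_def rho_def field_simps inner_diff_left)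
    thus "X = V2" using X by (simp add: V2_def)
  qed
qed

lemma osc_eq: "t0 < t \<Longrightarrow> t < t1 \<Longrightarrow> osc_plane r t = {X. (X - r t) \<bullet> gat t = 0}"
  using ub_eq[of t] inU[of t] by (simp add: osc_plane_def gat_gt)

lemma ratio_gen:
  assumes t: "t0 < t" "t < t1" and "(B - A) \<bullet> gat t \<noteq> 0"
  shows "dist B (THE X. X \<in> osc_plane r t \<inter> line_through A B) / dist B A
     = \<bar>1 - ((r t - A) \<bullet> gat t) / ((B - A) \<bullet> gat t)\<bar>"
proof -
  have "B \<noteq> A" using assms(3) by auto
  thus ?thesis unfolding osc_eq[OF t] the_plane_line[OF assms(3)] by (rule dist_ratio)
qed

end

lemma mono_cong:
  assumes "\<And>t. t \<in> S \<Longrightarrow> g t = h t" "mono_on S h \<or> antimono_on S h"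
  shows "mono_on S g \<or> antimono_on S g"
  using assms by (auto simp: monotone_on_def)

lemma opp_signs:
  fixes f e a b :: real
  assumes "f \<noteq> 0" "e \<noteq> 0" "a \<noteq> 0" "b \<noteq> 0" "f > 0 \<longleftrightarrow> e < 0" "a > 0 \<longleftrightarrow> b > 0"
  shows "b * f \<noteq> a * e"
proof -
  have "(b * f) * (a * e) < 0"
  proof (cases "f > 0"; cases "a > 0")
    assume "f > 0" "a > 0" thus ?thesis using assms by (simp add: mult_pos_neg mult_neg_pos mult_pos_pos)
  next
    assume "f > 0" "\<not> a > 0" thus ?thesis using assms
      by (simp add: mult_pos_neg mult_neg_pos mult_pos_pos mult_neg_neg)
  next
    assume "\<not> f > 0" "a > 0" thus ?thesis using assms
      by (simp add: mult_pos_neg mult_neg_pos mult_pos_pos mult_neg_neg)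
  next
    assume "\<not> f > 0" "\<not> a > 0" thus ?thesis using assms
      by (simp add: mult_pos_neg mult_neg_pos mult_pos_pos mult_neg_neg)
  qed
  thus ?thesis by auto
qed

context seg begin

lemma L1_nz: "L1 \<noteq> 0" using lam_nz[of t0 t1] t01 by (simp add: L1_def)
lemma nu_nz: "nu \<noteq> 0" using rho_nz[of t0 t1] t01 by (simp add: nu_def)

lemma lam_strict: "strict_mono_on {t0<..<t1} (lam t0) \<or> strict_antimono_on {t0<..<t1} (lam t0)"
proof -
  have "continuous_on {t0<..<t1} (\<lambda>u. ((r u - r t0) \<bullet> gat u) / (alt t0 \<bullet> gat u))"
  proof -
    have cr: "continuous_on {t0<..<t1} r" by (rule continuous_on_subset[OF cont_r]) auto
    have cg: "continuous_on {t0<..<t1} gat" by (rule continuous_on_subset[OF gat_cont]) auto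
    show ?thesis using cr cg conds(1)[of t0] by (intro continuous_intros) auto
  qed
  hence c: "continuous_on {t0<..<t1} (lam t0)" by (simp add: lam_def[abs_def])
  have "inj_on (lam t0) {t0<..<t1}"
  proof (rule inj_onI, rule ccontr)
    fix a b assume ab: "a \<in> {t0<..<t1}" "b \<in> {t0<..<t1}" "lam t0 a = lam t0 b" "a \<noteq> b"
    show False
    proof (cases "a < b")
      case True thus False using lam_ne[of t0 a b] ab by auto
    next
      case False thus False using lam_ne[of t0 b a] ab by auto
    qed
  qed
  thus ?thesis using injective_eq_monotone_map[OF _ c] by (simp add: is_interval_1)
qed

lemma rho_strict: "strict_mono_on {t0<..<t1} (rho t1) \<or> strict_antimono_on {t0<..<t1} (rho t1)"
proof -
  have "continuous_on {t0<..<t1} (\<lambda>t. ((r t - r t1) \<bullet> gat t) / (alt t1 \<bullet> gat t))"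
  proof -
    have cr: "continuous_on {t0<..<t1} r" by (rule continuous_on_subset[OF cont_r]) auto
    have cg: "continuous_on {t0<..<t1} gat" by (rule continuous_on_subset[OF gat_cont]) auto
    show ?thesis using cr cg conds(2)[of _ t1] by (intro continuous_intros) auto
  qed
  hence c: "continuous_on {t0<..<t1} (rho t1)" by (simp add: rho_def[abs_def])
  have "inj_on (rho t1) {t0<..<t1}"
  proof (rule inj_onI, rule ccontr)
    fix a b assume ab: "a \<in> {t0<..<t1}" "b \<in> {t0<..<t1}" "rho t1 a = rho t1 b" "a \<noteq> b"
    show False
    proof (cases "a < b")
      case True thus False using rho_ne[of a b t1] ab by auto
    next
      case False thus False using rho_ne[of b a t1] ab by auto
    qed
  qed
  thus ?thesis using injective_eq_monotone_map[OF _ c] by (simp add: is_interval_1)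
qed

lemma k1_eq: "t0 < t \<Longrightarrow> t < t1 \<Longrightarrow> tet_ratio r t0 t1 1 t = 1 + (- 1 / L1) * lam t0 t"
proof -
  assume t: "t0 < t" "t < t1"
  have a: "alt t0 \<bullet> gat t \<noteq> 0" using conds(1)[of t0 t] t by auto
  have d: "(V1 - r t0) \<bullet> gat t = L1 * (alt t0 \<bullet> gat t)" by (simp add: V1_def)
  have ne: "(V1 - r t0) \<bullet> gat t \<noteq> 0" using a L1_nz d by simp
  have "tet_ratio r t0 t1 1 t = \<bar>1 - ((r t - r t0) \<bullet> gat t) / ((V1 - r t0) \<bullet> gat t)\<bar>"
    unfolding tet_ratio_def Let_def using ratio_gen[OF t ne] by (simp add: vert0 vert1 vert1[simplified])
  also have "((r t - r t0) \<bullet> gat t) / ((V1 - r t0) \<bullet> gat t) = lam t0 t / L1"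
    unfolding d using a L1_nz by (simp add: lam_def field_simps)
  finally have "tet_ratio r t0 t1 1 t = \<bar>1 - lam t0 t / L1\<bar>" .
  thus ?thesis using k1_range[OF t] by (simp add: L1_def)
qed

lemma k3_eq: "t0 < t \<Longrightarrow> t < t1 \<Longrightarrow> tet_ratio r t0 t1 3 t = 0 + (1 / nu) * rho t1 t"
proof -
  assume t: "t0 < t" "t < t1"
  have b: "alt t1 \<bullet> gat t \<noteq> 0" using conds(2)[of t t1] t by auto
  have d: "(r t1 - V2) \<bullet> gat t = - nu * (alt t1 \<bullet> gat t)" by (simp add: V2_def inner_diff_left inner_add_left)
  have ne: "(r t1 - V2) \<bullet> gat t \<noteq> 0" using b nu_nz d by simp
  have "tet_ratio r t0 t1 3 t = \<bar>1 - ((r t - V2) \<bullet> gat t) / ((r t1 - V2) \<bullet> gat t)\<bar>"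
    unfolding tet_ratio_def Let_def using ratio_gen[OF t ne] by (simp add: vert2 vert3)
  also have "1 - ((r t - V2) \<bullet> gat t) / ((r t1 - V2) \<bullet> gat t) = rho t1 t / nu"
  proof -
    have "(r t - V2) \<bullet> gat t = (r t - r t1) \<bullet> gat t - nu * (alt t1 \<bullet> gat t)"
      by (simp add: V2_def inner_diff_left inner_add_left)
    thus ?thesis unfolding d using b nu_nz by (simp add: rho_def field_simps)
  qed
  finally have "tet_ratio r t0 t1 3 t = \<bar>rho t1 t / nu\<bar>" .
  moreover have q: "0 < rho t1 t / nu" using k3_range[OF t] by (simp add: nu_def)
  ultimately show ?thesis by (simp only: abs_of_pos[OF q]) simp
qed

end

lemma sign3:
  fixes A B F E :: real
  assumes "A * F < 0" "B * E < 0" "F * E < 0"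
  shows "A * B < 0"
  using assms by (auto simp: mult_less_0_iff)

lemma qpos: "0 < q \<Longrightarrow> q < 1 \<Longrightarrow> x \<noteq> 0 \<Longrightarrow> - (x ^ 2 * (q * (1 - q))) < (0::real)"
  by (simp add: mult_pos_pos)

context seg begin

definition "ft t X = (X - r t) \<bullet> gat t"

lemma ftV1: assumes t: "t0 < t" "t < t1" shows "ft t V1 * fF t0 t < 0"
proof -
  define q where "q = lam t0 t / L1"
  have q: "0 < q" "q < 1" using k1_range[OF t] by (simp_all add: q_def L1_def)
  have a: "aF t0 t \<noteq> 0" using condsT[of "(t0, t)"] t by (auto simp: T_def)
  have l: "lam t0 t = q * L1" using L1_nz by (simp add: q_def)
  have f: "fF t0 t = - (lam t0 t) * aF t0 t" using a by (simp add: lam_alt)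
  have "ft t V1 = fF t0 t + L1 * aF t0 t"
    by (simp add: ft_def V1_def fF_def aF_def inner_diff_left inner_add_left)
  hence h: "ft t V1 = L1 * aF t0 t * (1 - q)" unfolding f l by (simp add: algebra_simps)
  have "ft t V1 * fF t0 t = - ((aF t0 t * L1) ^ 2 * (q * (1 - q)))"
    unfolding h f l by (simp add: power2_eq_square algebra_simps)
  also have "\<dots> < 0" by (rule qpos[OF q]) (use a L1_nz in simp)
  finally show ?thesis .
qed

lemma ftV2: assumes t: "t0 < t" "t < t1" shows "ft t V2 * eF t t1 < 0"
proof -
  define q where "q = rho t1 t / nu"
  have q: "0 < q" "q < 1" using k3_range[OF t] by (simp_all add: q_def nu_def)
  have b: "bF t t1 \<noteq> 0" using condsT[of "(t, t1)"] t by (auto simp: T_def)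
  have l: "rho t1 t = q * nu" using nu_nz by (simp add: q_def)
  have e: "eF t t1 = - (rho t1 t) * bF t t1" using b by (simp add: rho_alt)
  have "ft t V2 = eF t t1 + nu * bF t t1"
    by (simp add: ft_def V2_def eF_def bF_def inner_diff_left inner_add_left)
  hence h: "ft t V2 = nu * bF t t1 * (1 - q)" unfolding e l by (simp add: algebra_simps)
  have "ft t V2 * eF t t1 = - ((bF t t1 * nu) ^ 2 * (q * (1 - q)))"
    unfolding h e l by (simp add: power2_eq_square algebra_simps)
  also have "\<dots> < 0" by (rule qpos[OF q]) (use b nu_nz in simp)
  finally show ?thesis .
qed

lemma ft_opp: assumes t: "t0 < t" "t < t1" shows "ft t V1 * ft t V2 < 0"
proof -
  have fe: "fF t0 t * eF t t1 < 0"
  proof -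
    have "fF t0 t > 0 \<longleftrightarrow> eF t t1 < 0" using signs_global(1)[of t0 t t t1] t by auto
    moreover have "fF t0 t \<noteq> 0" "eF t t1 \<noteq> 0" using condsT[of "(t0, t)"] condsT[of "(t, t1)"] t by (auto simp: T_def)
    ultimately show ?thesis by (auto simp: mult_less_0_iff)
  qed
  show ?thesis by (rule sign3[OF ftV1[OF t] ftV2[OF t] fe])
qed

definition "mu2 t = ((r t - V1) \<bullet> gat t) / ((V2 - V1) \<bullet> gat t)"

lemma den2: "t0 < t \<Longrightarrow> t < t1 \<Longrightarrow> (V2 - V1) \<bullet> gat t \<noteq> 0"
proof -
  assume t: "t0 < t" "t < t1"
  have "(V2 - V1) \<bullet> gat t = ft t V2 - ft t V1" by (simp add: ft_def inner_diff_left)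
  thus ?thesis using ft_opp[OF t] by auto
qed

lemma mu2_range: assumes t: "t0 < t" "t < t1" shows "0 < mu2 t \<and> mu2 t < 1"
proof -
  have m: "mu2 t = ft t V1 / (ft t V1 - ft t V2)"
  proof -
    have "(r t - V1) \<bullet> gat t = - ft t V1" "(V2 - V1) \<bullet> gat t = ft t V2 - ft t V1"
      by (simp_all add: ft_def inner_diff_left)
    thus ?thesis by (simp add: mu2_def minus_divide_right)
  qed
  have o: "ft t V1 * ft t V2 < 0" by (rule ft_opp[OF t])
  show ?thesis
  proof (cases "ft t V1 > 0")
    case True
    hence "ft t V2 < 0" using o by (auto simp: mult_less_0_iff)
    thus ?thesis using True unfolding m by (auto simp: divide_simps)
  next
    case False
    hence "ft t V1 < 0" "ft t V2 > 0" using o by (auto simp: mult_less_0_iff)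
    thus ?thesis unfolding m by (auto simp: divide_simps)
  qed
qed

lemma k2_eq: "t0 < t \<Longrightarrow> t < t1 \<Longrightarrow> tet_ratio r t0 t1 2 t = 1 + (- 1) * mu2 t"
proof -
  assume t: "t0 < t" "t < t1"
  have "tet_ratio r t0 t1 2 t = \<bar>1 - mu2 t\<bar>"
    unfolding tet_ratio_def Let_def using ratio_gen[OF t den2[OF t]]
    by (simp add: vert2 vert1 vert1[simplified] mu2_def)
  thus ?thesis using mu2_range[OF t] by simp
qed

end

context seg begin

lemma sigma:
  assumes x: "t0 < x" "x < t1"
  shows "cross3 (r x - V1) (V2 - V1) \<bullet> R1 x \<noteq> 0"
proof
  assume z: "cross3 (r x - V1) (V2 - V1) \<bullet> R1 x = 0"
  define d where "d = V2 - V1"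
  have dne: "d \<noteq> 0" using den2[OF x] by (auto simp: d_def)
  have d0: "d \<bullet> gat t0 = 0"
  proof -
    have "d = (V2 - r t0) - (V1 - r t0)" by (simp add: d_def)
    thus ?thesis using V1_planes(1) V2_planes(2) by (simp add: inner_diff_left)
  qed
  have d1: "d \<bullet> gat t1 = 0"
  proof -
    have "d = (V2 - r t1) - (V1 - r t1)" by (simp add: d_def)
    thus ?thesis using V1_planes(2) V2_planes(1) by (simp add: inner_diff_left)
  qed
  have R: "R1 x = norm (R1 x) *\<^sub>R al x" using regular(3)[of x] x by (simp add: al_def)
  have nR: "norm (R1 x) \<noteq> 0" using regular(3)[of x] x by simp
  have "cross3 (r x - V1) d \<bullet> al x = 0"
    using z nR by (subst (asm) R) (simp add: d_def)
  hence "cross3 (al x) (r x - V1) \<bullet> d = 0" using triple_cyclic[of "r x - V1" d "al x"] by simp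
  hence "d \<bullet> cross3 (al x) (r x - V1) = 0" by (metis inner_commute)
  hence "cross3 (al x) (r x - V1) \<bullet> cross3 (gat t0) (gat t1) = 0"
    using triple_orth_zero[OF dne _ d0 d1] by blast
  hence eq: "(al x \<bullet> gat t0) * ((r x - V1) \<bullet> gat t1) - (al x \<bullet> gat t1) * ((r x - V1) \<bullet> gat t0) = 0"
    using binet_cauchy[of "al x" "gat t0" "r x - V1" "gat t1"] by simp
  have 1: "al x \<bullet> gat t0 = bF t0 x" using x by (simp add: bF_def alt_gt)
  have 2: "al x \<bullet> gat t1 = aF x t1" using x by (simp add: aF_def alt_gt)
  have 3: "(r x - V1) \<bullet> gat t1 = fF x t1"
  proof -
    have "r x - V1 = (r x - r t1) - (V1 - r t1)" by simp
    thus ?thesis using V1_planes(2) by (simp add: fF_def inner_diff_left)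
  qed
  have 4: "(r x - V1) \<bullet> gat t0 = eF t0 x"
  proof -
    have "r x - V1 = (r x - r t0) - (V1 - r t0)" by simp
    thus ?thesis using V1_planes(1) by (simp add: eF_def inner_diff_left)
  qed
  have "bF t0 x * fF x t1 = aF x t1 * eF t0 x" using eq unfolding 1 2 3 4 by simp
  moreover have "bF t0 x * fF x t1 \<noteq> aF x t1 * eF t0 x"
  proof (rule opp_signs)
    show "fF x t1 \<noteq> 0" "aF x t1 \<noteq> 0" using condsT[of "(x, t1)"] x by (auto simp: T_def)
    show "eF t0 x \<noteq> 0" "bF t0 x \<noteq> 0" using condsT[of "(t0, x)"] x by (auto simp: T_def)
    show "fF x t1 > 0 \<longleftrightarrow> eF t0 x < 0" using signs_global(1)[of x t1 t0 x] x by auto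
    show "aF x t1 > 0 \<longleftrightarrow> bF t0 x > 0" using signs_global(2)[of x t1 t0 x] x by auto
  qed
  ultimately show False by simp
qed

lemma mu2_Mf: "t0 < u \<Longrightarrow> u < t1 \<Longrightarrow> mu2 u = Mf V1 (V2 - V1) u"
  using regular(1)[of u] by (simp add: mu2_def Mf_def gat_gt ga_def)

lemma mu2_ne:
  assumes "t0 < a" "a < b" "b < t1"
  shows "mu2 a \<noteq> mu2 b"
proof (rule rolle_ne[OF assms(2), where F'="Md V1 (V2 - V1)"])
  have cr: "continuous_on {a..b} r" by (rule continuous_on_subset[OF cont_r]) (use assms in auto)
  have cg: "continuous_on {a..b} gat" by (rule continuous_on_subset[OF gat_cont]) (use assms in auto)
  have nz: "\<forall>x\<in>{a..b}. (V2 - V1) \<bullet> gat x \<noteq> 0" using den2 assms by auto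
  have "continuous_on {a..b} (\<lambda>u. ((r u - V1) \<bullet> gat u) / ((V2 - V1) \<bullet> gat u))"
    using cr cg nz by (intro continuous_intros) auto
  thus "continuous_on {a..b} mu2" by (simp add: mu2_def[abs_def])
next
  fix x assume x: "a < x" "x < b"
  have xs: "t0 < x" "x < t1" using x assms by auto
  have xU: "x \<in> U" using xs by (intro inU) auto
  have w: "(V2 - V1) \<bullet> c x \<noteq> 0"
    using den2[OF xs] regular(1)[of x] xs by (auto simp: gat_gt ga_def)
  have D: "Dl x \<noteq> 0" using regular(2)[of x] xs by auto
  show "Md V1 (V2 - V1) x \<noteq> 0" by (rule Md_ne[OF w D sigma[OF xs]])
  have "(Mf V1 (V2 - V1) has_real_derivative Md V1 (V2 - V1) x) (at x)"
    unfolding Md_def by (rule Mf_deriv[OF xU w])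
  thus "(mu2 has_real_derivative Md V1 (V2 - V1) x) (at x)"
    by (rule has_field_derivative_transform_within_open[where S="{t0<..<t1}"])
       (use xs mu2_Mf in auto)
qed

lemma mu2_strict: "strict_mono_on {t0<..<t1} mu2 \<or> strict_antimono_on {t0<..<t1} mu2"
proof -
  have cr: "continuous_on {t0<..<t1} r" by (rule continuous_on_subset[OF cont_r]) auto
  have cg: "continuous_on {t0<..<t1} gat" by (rule continuous_on_subset[OF gat_cont]) auto
  have "continuous_on {t0<..<t1} (\<lambda>u. ((r u - V1) \<bullet> gat u) / ((V2 - V1) \<bullet> gat u))"
    using cr cg den2 by (intro continuous_intros) auto
  hence c: "continuous_on {t0<..<t1} mu2" by (simp add: mu2_def[abs_def])
  have "inj_on mu2 {t0<..<t1}"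
  proof (rule inj_onI, rule ccontr)
    fix a b assume ab: "a \<in> {t0<..<t1}" "b \<in> {t0<..<t1}" "mu2 a = mu2 b" "a \<noteq> b"
    show False
    proof (cases "a < b")
      case True thus False using mu2_ne[of a b] ab by auto
    next
      case False thus False using mu2_ne[of b a] ab by auto
    qed
  qed
  thus ?thesis using injective_eq_monotone_map[OF _ c] by (simp add: is_interval_1)
qed

theorem main:
  "\<forall>i\<in>{1, 2, 3 :: nat}.
     (mono_on {t0<..<t1} (tet_ratio r t0 t1 i) \<or> antimono_on {t0<..<t1} (tet_ratio r t0 t1 i)) \<and>
     (\<forall>t\<in>{t0<..<t1}. 0 < tet_ratio r t0 t1 i t \<and> tet_ratio r t0 t1 i t < 1)"
proof (intro ballI conjI)
  fix i :: nat assume i: "i \<in> {1, 2, 3}"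
  show "mono_on {t0<..<t1} (tet_ratio r t0 t1 i) \<or> antimono_on {t0<..<t1} (tet_ratio r t0 t1 i)"
  proof -
    have "i = 1 \<or> i = 2 \<or> i = 3" using i by auto
    thus ?thesis
    proof (elim disjE)
      assume "i = 1" thus ?thesis
        using mono_cong[OF _ mono_affine[OF lam_strict, of 1 "- 1 / L1"], of "tet_ratio r t0 t1 1"] k1_eq by auto
    next
      assume "i = 2" thus ?thesis
        using mono_cong[OF _ mono_affine[OF mu2_strict, of 1 "- 1"], of "tet_ratio r t0 t1 2"] k2_eq by auto
    next
      assume "i = 3" thus ?thesis
        using mono_cong[OF _ mono_affine[OF rho_strict, of 0 "1 / nu"], of "tet_ratio r t0 t1 3"] k3_eq by auto
    qed
  qed
  fix t assume t: "t \<in> {t0<..<t1}"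
  hence t': "t0 < t" "t < t1" by auto
  have "i = 1 \<or> i = 2 \<or> i = 3" using i by auto
  hence "0 < tet_ratio r t0 t1 i t \<and> tet_ratio r t0 t1 i t < 1"
  proof (elim disjE)
    assume "i = 1" thus ?thesis
      using k1_eq[OF t'] k1_range[OF t'] by (simp add: L1_def)
  next
    assume "i = 2" thus ?thesis using k2_eq[OF t'] mu2_range[OF t'] by simp
  next
    assume "i = 3" thus ?thesis using k3_eq[OF t'] k3_range[OF t'] by (simp add: nu_def)
  qed
  thus "0 < tet_ratio r t0 t1 i t" "tet_ratio r t0 t1 i t < 1" by auto
qed

end

theorem corollary1:
  fixes P Q :: "real poly ^ 3" and I :: "real set" and t0 t1 :: real
  assumes "rational_space_curve P Q I"
    and "admissible_segment P Q I t0 t1"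
  shows "\<forall>i\<in>{1, 2, 3 :: nat}.
           (mono_on {t0<..<t1} (tet_ratio (rcurve P Q) t0 t1 i) \<or>
            antimono_on {t0<..<t1} (tet_ratio (rcurve P Q) t0 t1 i)) \<and>
           (\<forall>t\<in>{t0<..<t1}. 0 < tet_ratio (rcurve P Q) t0 t1 i t \<and>
                             tet_ratio (rcurve P Q) t0 t1 i t < 1)"
proof -
  interpret seg P Q I t0 t1 using assms by unfold_locales
  show ?thesis by (rule main)
qed

end
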